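(* Let $(H,R)$ be a finite dimensional quasitriangular Hopf algebra and equip $H^*$ with the coquasitriangular structure $\sigma(p,q)=p(R^1)q(R^2)$. Let $H^*_l=\{l_q=\sigma(-,q)\mid q\in H^*\}$ and $H^*_r=\{r_p=\sigma(p,-)\mid p\in H^*\}$, sub-Hopf algebras of $H^{**}$, and let $D(H^*_r,H^*_l)$ be the generalized quantum double with respect to the skew pairing $r_p\otimes l_q\mapsto\sigma(p,q)$. Then $$D(H^*_r,H^*_l)\cong D(H^*_l)\cong D((H^*_r)^{\rm op})^{\rm op}$$ as Hopf algebras.
   Context: $R=R^1\otimes R^2\in H\otimes H$ (summation understood) is the $R$-matrix. $H^{**}$ has the Hopf structure dual to $H^*$; $l_{qq'}=l_{q'}l_q$, $\Delta(l_q)=l_{q_1}\otimes l_{q_2}$, $r_{pp'}=r_pr_{p'}$, $\Delta(r_p)=r_{p_2}\otimes r_{p_1}$. For a skew pairing $\wp$ on $\mathfrak B\otimes\mathfrak H$ ($\wp(bb',h)=\wp(b,h_1)\wp(b',h_2)$, $\wp(b,hh')=\wp(b_2,h)\wp(b_1,h')$, unital), $D(\mathfrak B,\mathfrak H)$ is the Hopf algebra on $\mathfrak B\otimes\mathfrak H$ with tensor product coalgebra, unit $1\otimes1$ and multiplication $(b\otimes h)(b'\otimes h')=\wp(b'_1,h_1)\wp^{-1}(b'_3,h_3)bb'_2\otimes h_2h'$. For a finite dimensional Hopf algebra $K$, the Drinfeld double is $D(K)=D(K^{*\rm cop},K)$ with respect to evaluation, i.e. multiplication $(f\otimes x)(g\otimes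 y)=g_3(x_1)g_1(S^{-1}(x_3))fg_2\otimes x_2y$ and comultiplication $\Delta(f\otimes x)=(f_2\otimes x_1)\otimes(f_1\otimes x_2)$. *)

theory Defs
  imports Main
begin

text \<open>Finite dimensional Hopf algebras over a field 'k, given in coordinates with respect to
a basis indexed by a finite type 'i (structure constants).
  hmul a b c : coefficient of e_c in e_a e_b
  hone a     : coefficient of e_a in 1
  hcom a x y : coefficient of e_x (x) e_y in Delta(e_a)
  hcou a     : counit of e_a
  hant a b   : coefficient of e_b in S(e_a)\<close>

record ('i, 'k) hopf =
  hmul :: "'i \<Rightarrow> 'i \<Rightarrow> 'i \<Rightarrow> 'k"
  hone :: "'i \<Rightarrow> 'k"
  hcom :: "'i \<Rightarrow> 'i \<Rightarrow> 'i \<Rightarrow> 'k"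
  hcou :: "'i \<Rightarrow> 'k"
  hant :: "'i \<Rightarrow> 'i \<Rightarrow> 'k"

definition kd :: "'i \<Rightarrow> 'i \<Rightarrow> 'k::field" where
  "kd a b = (if a = b then 1 else 0)"

definition hopf_alg :: "('i::finite, 'k::field) hopf \<Rightarrow> bool" where
  "hopf_alg H \<longleftrightarrow>
    (\<forall>a b c d. (\<Sum>e\<in>UNIV. hmul H a b e * hmul H e c d) = (\<Sum>e\<in>UNIV. hmul H b c e * hmul H a e d)) \<and>
    (\<forall>a c. (\<Sum>e\<in>UNIV. hone H e * hmul H e a c) = kd a c \<and> (\<Sum>e\<in>UNIV. hone H e * hmul H a e c) = kd a c) \<and>
    (\<forall>a x y z. (\<Sum>e\<in>UNIV. hcom H a e z * hcom H e x y) = (\<Sum>e\<in>UNIV. hcom H a x e * hcom H e y z)) \<and>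
    (\<forall>a b. (\<Sum>e\<in>UNIV. hcom H a e b * hcou H e) = kd a b \<and> (\<Sum>e\<in>UNIV. hcom H a b e * hcou H e) = kd a b) \<and>
    (\<forall>a b x y. (\<Sum>c\<in>UNIV. hmul H a b c * hcom H c x y) =
        (\<Sum>a1\<in>UNIV. \<Sum>a2\<in>UNIV. \<Sum>b1\<in>UNIV. \<Sum>b2\<in>UNIV.
           hcom H a a1 a2 * hcom H b b1 b2 * hmul H a1 b1 x * hmul H a2 b2 y)) \<and>
    (\<forall>x y. (\<Sum>c\<in>UNIV. hone H c * hcom H c x y) = hone H x * hone H y) \<and>
    (\<forall>a b. (\<Sum>c\<in>UNIV. hmul H a b c * hcou H c) = hcou H a * hcou H b) \<and>
    (\<Sum>c\<in>UNIV. hone H c * hcou H c) = 1 \<and>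
    (\<forall>a c. (\<Sum>x\<in>UNIV. \<Sum>y\<in>UNIV. hcom H a x y * (\<Sum>z\<in>UNIV. hant H x z * hmul H z y c)) = hcou H a * hone H c) \<and>
    (\<forall>a c. (\<Sum>x\<in>UNIV. \<Sum>y\<in>UNIV. hcom H a x y * (\<Sum>z\<in>UNIV. hant H y z * hmul H x z c)) = hcou H a * hone H c)"

definition antinv :: "('i::finite, 'k::field) hopf \<Rightarrow> 'i \<Rightarrow> 'i \<Rightarrow> 'k" where
  "antinv H = (THE T. \<forall>a c. (\<Sum>b\<in>UNIV. hant H a b * T b c) = kd a c \<and> (\<Sum>b\<in>UNIV. T a b * hant H b c) = kd a c)"

definition hdual :: "('i, 'k) hopf \<Rightarrow> ('i, 'k) hopf" where
  "hdual H = \<lparr>hmul = (\<lambda>x y a. hcom H a x y), hone = hcou H,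
              hcom = (\<lambda>a x y. hmul H x y a), hcou = hone H, hant = (\<lambda>a b. hant H b a)\<rparr>"

definition hop :: "('i::finite, 'k::field) hopf \<Rightarrow> ('i, 'k) hopf" where
  "hop H = \<lparr>hmul = (\<lambda>a b c. hmul H b a c), hone = hone H, hcom = hcom H, hcou = hcou H,
            hant = antinv H\<rparr>"

definition hcop :: "('i::finite, 'k::field) hopf \<Rightarrow> ('i, 'k) hopf" where
  "hcop H = \<lparr>hmul = hmul H, hone = hone H, hcom = (\<lambda>a x y. hcom H a y x), hcou = hcou H,
             hant = antinv H\<rparr>"

text \<open>Quasitriangular structure R = sum R a b e_a (x) e_b.\<close>
definition quasitriangular :: "('i::finite, 'k::field) hopf \<Rightarrow> ('i \<Rightarrow> 'i \<Rightarrow> 'k) \<Rightarrow> bool" where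
  "quasitriangular H R \<longleftrightarrow>
    (\<exists>R'. \<forall>x y.
       (\<Sum>a\<in>UNIV. \<Sum>b\<in>UNIV. \<Sum>a'\<in>UNIV. \<Sum>b'\<in>UNIV. R a b * R' a' b' * hmul H a a' x * hmul H b b' y)
          = hone H x * hone H y \<and>
       (\<Sum>a\<in>UNIV. \<Sum>b\<in>UNIV. \<Sum>a'\<in>UNIV. \<Sum>b'\<in>UNIV. R' a b * R a' b' * hmul H a a' x * hmul H b b' y)
          = hone H x * hone H y) \<and>
    (\<forall>c x y.
       (\<Sum>a\<in>UNIV. \<Sum>b\<in>UNIV. \<Sum>a'\<in>UNIV. \<Sum>b'\<in>UNIV. hcom H c b a * R a' b' * hmul H a a' x * hmul H b b' y)
     = (\<Sum>a\<in>UNIV. \<Sum>b\<in>UNIV. \<Sum>a'\<in>UNIV. \<Sum>b'\<in>UNIV. R a b * hcom H c a' b' * hmul H a a' x * hmul H b b' y)) \<and>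
    (\<forall>x y z. (\<Sum>a\<in>UNIV. R a z * hcom H a x y) = (\<Sum>b\<in>UNIV. \<Sum>d\<in>UNIV. R x b * R y d * hmul H b d z)) \<and>
    (\<forall>x y z. (\<Sum>a\<in>UNIV. R x a * hcom H a y z) = (\<Sum>a\<in>UNIV. \<Sum>c\<in>UNIV. R a z * R c y * hmul H a c x))"

text \<open>Elements p of H^* are given by their values p a = p(e_a).
  sigma(p,q) = p(R^1) q(R^2).  Elements of H^** are given by their values on the dual basis e^i.\<close>
definition sigma :: "('i::finite \<Rightarrow> 'i \<Rightarrow> 'k::field) \<Rightarrow> ('i \<Rightarrow> 'k) \<Rightarrow> ('i \<Rightarrow> 'k) \<Rightarrow> 'k" where
  "sigma R p q = (\<Sum>a\<in>UNIV. \<Sum>b\<in>UNIV. R a b * p a * q b)"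

definition lvec :: "('i::finite \<Rightarrow> 'i \<Rightarrow> 'k::field) \<Rightarrow> ('i \<Rightarrow> 'k) \<Rightarrow> 'i \<Rightarrow> 'k" where
  "lvec R q = (\<lambda>i. sigma R (\<lambda>a. kd i a) q)"

definition rvec :: "('i::finite \<Rightarrow> 'i \<Rightarrow> 'k::field) \<Rightarrow> ('i \<Rightarrow> 'k) \<Rightarrow> 'i \<Rightarrow> 'k" where
  "rvec R p = (\<lambda>j. sigma R p (\<lambda>b. kd j b))"

text \<open>Linear map given by the images phi a of the basis vectors.\<close>
definition linext :: "('a::finite \<Rightarrow> 'b \<Rightarrow> 'k::field) \<Rightarrow> ('a \<Rightarrow> 'k) \<Rightarrow> 'b \<Rightarrow> 'k" where
  "linext \<phi> c = (\<lambda>z. \<Sum>a\<in>UNIV. c a * \<phi> a z)"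

definition lin_inj :: "('a::finite \<Rightarrow> 'b \<Rightarrow> 'k::field) \<Rightarrow> bool" where
  "lin_inj \<phi> \<longleftrightarrow> (\<forall>c. linext \<phi> c = (\<lambda>_. 0) \<longrightarrow> c = (\<lambda>_. 0))"

text \<open>Bialgebra morphism (for Hopf algebras this is a Hopf algebra morphism).\<close>
definition hopf_hom :: "('a::finite, 'k::field) hopf \<Rightarrow> ('b::finite, 'k) hopf \<Rightarrow> ('a \<Rightarrow> 'b \<Rightarrow> 'k) \<Rightarrow> bool" where
  "hopf_hom A B \<phi> \<longleftrightarrow>
    (\<forall>a b z. (\<Sum>c\<in>UNIV. hmul A a b c * \<phi> c z) = (\<Sum>x\<in>UNIV. \<Sum>y\<in>UNIV. \<phi> a x * \<phi> b y * hmul B x y z)) \<and>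
    (\<forall>z. (\<Sum>a\<in>UNIV. hone A a * \<phi> a z) = hone B z) \<and>
    (\<forall>a x y. (\<Sum>z\<in>UNIV. \<phi> a z * hcom B z x y) = (\<Sum>c\<in>UNIV. \<Sum>d\<in>UNIV. hcom A a c d * \<phi> c x * \<phi> d y)) \<and>
    (\<forall>a. (\<Sum>z\<in>UNIV. \<phi> a z * hcou B z) = hcou A a)"

definition hopf_iso :: "('a::finite, 'k::field) hopf \<Rightarrow> ('b::finite, 'k) hopf \<Rightarrow> bool" where
  "hopf_iso A B \<longleftrightarrow> (\<exists>\<phi> \<psi>. hopf_hom A B \<phi> \<and>
      (\<forall>a a'. (\<Sum>z\<in>UNIV. \<phi> a z * \<psi> z a') = kd a a') \<and>
      (\<forall>z z'. (\<Sum>a\<in>UNIV. \<psi> z a * \<phi> a z') = kd z z'))"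

definition pconv :: "('b::finite, 'k::field) hopf \<Rightarrow> ('l::finite, 'k) hopf \<Rightarrow>
     ('b \<Rightarrow> 'l \<Rightarrow> 'k) \<Rightarrow> ('b \<Rightarrow> 'l \<Rightarrow> 'k) \<Rightarrow> 'b \<Rightarrow> 'l \<Rightarrow> 'k" where
  "pconv B L f g = (\<lambda>b h. \<Sum>b1\<in>UNIV. \<Sum>b2\<in>UNIV. \<Sum>h1\<in>UNIV. \<Sum>h2\<in>UNIV.
        hcom B b b1 b2 * hcom L h h1 h2 * f b1 h1 * g b2 h2)"

definition pinv :: "('b::finite, 'k::field) hopf \<Rightarrow> ('l::finite, 'k) hopf \<Rightarrow>
     ('b \<Rightarrow> 'l \<Rightarrow> 'k) \<Rightarrow> 'b \<Rightarrow> 'l \<Rightarrow> 'k" where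
  "pinv B L P = (THE Q. pconv B L Q P = (\<lambda>b h. hcou B b * hcou L h) \<and>
                         pconv B L P Q = (\<lambda>b h. hcou B b * hcou L h))"

definition com2 :: "('i::finite, 'k::field) hopf \<Rightarrow> 'i \<Rightarrow> 'i \<Rightarrow> 'i \<Rightarrow> 'i \<Rightarrow> 'k" where
  "com2 H a x y z = (\<Sum>e\<in>UNIV. hcom H a e z * hcom H e x y)"

definition gd_mul :: "('b::finite, 'k::field) hopf \<Rightarrow> ('l::finite, 'k) hopf \<Rightarrow> ('b \<Rightarrow> 'l \<Rightarrow> 'k) \<Rightarrow>
     'b \<times> 'l \<Rightarrow> 'b \<times> 'l \<Rightarrow> 'b \<times> 'l \<Rightarrow> 'k" where
  "gd_mul B L P = (\<lambda>(b, h) (b', h') (c, d).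
     \<Sum>x1\<in>UNIV. \<Sum>x2\<in>UNIV. \<Sum>x3\<in>UNIV. \<Sum>y1\<in>UNIV. \<Sum>y2\<in>UNIV. \<Sum>y3\<in>UNIV.
       com2 B b' x1 x2 x3 * com2 L h y1 y2 y3 * P x1 y1 * pinv B L P x3 y3
       * hmul B b x2 c * hmul L y2 h' d)"

definition gen_double :: "('b::finite, 'k::field) hopf \<Rightarrow> ('l::finite, 'k) hopf \<Rightarrow> ('b \<Rightarrow> 'l \<Rightarrow> 'k) \<Rightarrow>
     ('b \<times> 'l, 'k) hopf" where
  "gen_double B L P = \<lparr>
     hmul = gd_mul B L P,
     hone = (\<lambda>(b, h). hone B b * hone L h),
     hcom = (\<lambda>(b, h) (b1, h1) (b2, h2). hcom B b b1 b2 * hcom L h h1 h2),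
     hcou = (\<lambda>(b, h). hcou B b * hcou L h),
     hant = (\<lambda>(b, h) (c, d). \<Sum>h'\<in>UNIV. \<Sum>b'\<in>UNIV. \<Sum>x\<in>UNIV. \<Sum>y\<in>UNIV.
               hant L h h' * hant B b b' * hone B x * hone L y * gd_mul B L P (x, h') (b', y) (c, d))\<rparr>"

text \<open>Drinfeld double D(K) = D(K^{* cop}, K) with respect to evaluation.\<close>
definition drinfeld :: "('i::finite, 'k::field) hopf \<Rightarrow> ('i \<times> 'i, 'k) hopf" where
  "drinfeld K = gen_double (hcop (hdual K)) K kd"

end

theory Submission
  imports Defs HOL.Vector_Spaces "HOL-Library.Function_Algebras"
begin

definition fscale :: "'k::field \<Rightarrow> ('n \<Rightarrow> 'k) \<Rightarrow> ('n \<Rightarrow> 'k)" where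
  "fscale c f = (\<lambda>x. c * f x)"

definition fbasis :: "('n \<Rightarrow> 'k::field) set" where
  "fbasis = range (\<lambda>b x. if x = b then 1 else 0)"

lemma fvs: "vector_space (fscale :: 'k::field \<Rightarrow> ('n \<Rightarrow> 'k) \<Rightarrow> _)"
  by unfold_locales (auto simp: fscale_def fun_eq_iff algebra_simps)

lemma fsum_apply: "(\<Sum>v\<in>S. f v) x = (\<Sum>v\<in>S. f v x)" for f :: "'a \<Rightarrow> 'n \<Rightarrow> 'k::comm_monoid_add"
  by (induction S rule: infinite_finite_induct) auto

lemma sum_ind1[simp]: "(\<Sum>x\<in>UNIV. (if x = a then 1 else 0) * g x) = (g (a::'a::finite) :: 'k::comm_semiring_1)"
  by (simp add: if_distrib[of "\<lambda>u. u * _"] cong: if_cong)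
lemma sum_ind2[simp]: "(\<Sum>x\<in>UNIV. g x * (if a = x then 1 else 0)) = (g (a::'a::finite) :: 'k::comm_semiring_1)"
  by (simp add: if_distrib[of "\<lambda>u. _ * u"] cong: if_cong)

lemma ffdvs: "finite_dimensional_vector_space (fscale :: 'k::field \<Rightarrow> ('n::finite \<Rightarrow> 'k) \<Rightarrow> _) fbasis"
proof -
  interpret vector_space "fscale :: 'k::field \<Rightarrow> ('n::finite \<Rightarrow> 'k) \<Rightarrow> _" by (rule fvs)
  let ?e = "\<lambda>b (x::'n). if x = b then (1::'k) else 0"
  have inj: "inj ?e" by (auto simp: inj_def fun_eq_iff)
  show ?thesis
  proof
    show "finite (fbasis :: ('n \<Rightarrow> 'k) set)" unfolding fbasis_def by simp
    show "independent (fbasis :: ('n \<Rightarrow> 'k) set)"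
    proof (rule independent_if_scalars_zero)
      show "finite (fbasis :: ('n \<Rightarrow> 'k) set)" unfolding fbasis_def by simp
      fix f :: "('n \<Rightarrow> 'k) \<Rightarrow> 'k" and x :: "'n \<Rightarrow> 'k"
      assume s: "(\<Sum>x\<in>fbasis. fscale (f x) x) = 0" and x: "x \<in> fbasis"
      then obtain b where b: "x = ?e b" unfolding fbasis_def by auto
      have "(\<Sum>x\<in>(fbasis::('n\<Rightarrow>'k) set). fscale (f x) x) b = 0" using s by simp
      hence "(\<Sum>y\<in>UNIV. f (?e y) * ?e y b) = 0"
        unfolding fbasis_def fsum_apply by (simp add: sum.reindex[OF inj] fscale_def)
      thus "f x = 0" using b by (simp add: if_distrib cong: if_cong)
    qed
    show "span (fbasis :: ('n \<Rightarrow> 'k) set) = UNIV"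
    proof (auto simp: span_finite fbasis_def)
      fix g :: "'n \<Rightarrow> 'k"
      show "g \<in> range (\<lambda>u. \<Sum>v\<in>range ?e. fscale (u v) v)"
      proof
        show "g = (\<Sum>v\<in>range ?e. fscale ((\<lambda>v. \<Sum>x\<in>UNIV. v x * g x) v) v)"
          by (auto simp: fun_eq_iff fsum_apply sum.reindex[OF inj] fscale_def)
      qed simp
    qed
  qed
qed

lemma kd_sym: "kd a b = kd b a" by (simp add: kd_def eq_commute)
lemma kd_sum1[simp]: "(\<Sum>x\<in>UNIV. kd a x * f x) = (f (a::'a::finite) :: 'k::field)"
  by (simp add: kd_def if_distrib[of "\<lambda>u. u * _"] cong: if_cong)
lemma kd_sum2[simp]: "(\<Sum>x\<in>UNIV. kd x a * f x) = (f (a::'a::finite) :: 'k::field)"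
  by (simp add: kd_def if_distrib[of "\<lambda>u. u * _"] cong: if_cong)
lemma kd_sum3[simp]: "(\<Sum>x\<in>UNIV. f x * kd a x) = (f (a::'a::finite) :: 'k::field)"
  by (simp add: kd_def if_distrib[of "\<lambda>u. _ * u"] cong: if_cong)
lemma kd_sum4[simp]: "(\<Sum>x\<in>UNIV. f x * kd x a) = (f (a::'a::finite) :: 'k::field)"
  by (simp add: kd_def if_distrib[of "\<lambda>u. _ * u"] cong: if_cong)

lemma kd_mult1: "kd a b * y = (if a = b then y else (0::'k::field))" by (simp add: kd_def)
lemma kd_mult2: "y * kd a b = (if a = b then y else (0::'k::field))" by (simp add: kd_def)
lemma if0_mult1: "(if P then x else 0) * y = (if P then x * y else (0::'k::field))" by simp
lemma if0_mult2: "y * (if P then x else 0) = (if P then y * x else (0::'k::field))" by simp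
lemmas kd_simps = kd_mult1 kd_mult2 if0_mult1 if0_mult2

lemma card_fbasis: "card (fbasis :: ('n::finite \<Rightarrow> 'k::field) set) = card (UNIV :: 'n set)"
proof -
  have "inj (\<lambda>b (x::'n). if x = b then (1::'k) else 0)" by (auto simp: inj_def fun_eq_iff)
  thus ?thesis unfolding fbasis_def by (simp add: card_image)
qed

definition lmap :: "('a::finite \<Rightarrow> 'b \<Rightarrow> 'k::field) \<Rightarrow> ('a \<Rightarrow> 'k) \<Rightarrow> 'b \<Rightarrow> 'k" where
  "lmap M c = (\<lambda>h. \<Sum>b\<in>UNIV. c b * M b h)"

lemma lmap_linear: "Vector_Spaces.linear fscale fscale (lmap (M :: 'a::finite \<Rightarrow> 'b \<Rightarrow> 'k::field))"
  unfolding linear_iff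
proof (intro conjI allI)
  show "(lmap M (x + y)) = lmap M x + lmap M y" for x y
    by (simp add: lmap_def fun_eq_iff sum.distrib distrib_right)
  show "lmap M (fscale c x) = fscale c (lmap M x)" for c x
    by (simp add: lmap_def fun_eq_iff fscale_def sum_distrib_left mult.assoc)
qed (rule fvs)+

lemma lmap_inj:
  assumes "\<forall>c. lmap M c = (\<lambda>_. 0) \<longrightarrow> c = (\<lambda>_. 0)"
  shows "inj (lmap M)"
proof (rule injI)
  fix x y assume "lmap M x = lmap M y"
  hence "lmap M (\<lambda>b. x b - y b) = (\<lambda>_. 0)"
    by (auto simp: lmap_def fun_eq_iff algebra_simps sum_subtractf)
  with assms have "(\<lambda>b. x b - y b) = (\<lambda>_. 0)" by blast
  thus "x = y" by (auto simp: fun_eq_iff)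
qed

lemma card_le_inj:
  fixes M :: "'a::finite \<Rightarrow> 'b::finite \<Rightarrow> 'k::field"
  assumes "\<forall>c. lmap M c = (\<lambda>_. 0) \<longrightarrow> c = (\<lambda>_. 0)"
  shows "card (UNIV :: 'a set) \<le> card (UNIV :: 'b set)"
proof -
  interpret p: finite_dimensional_vector_space_pair "fscale :: 'k \<Rightarrow> ('a \<Rightarrow> 'k) \<Rightarrow> _" fbasis
     "fscale :: 'k \<Rightarrow> ('b \<Rightarrow> 'k) \<Rightarrow> _" fbasis
    using ffdvs ffdvs by (simp add: finite_dimensional_vector_space_pair_def)
  have "p.vs2.dim (range (lmap M)) = p.vs1.dim (UNIV :: ('a \<Rightarrow> 'k) set)"
    by (rule p.dim_image_eq[OF lmap_linear[where M=M]]) (use lmap_inj[OF assms] in \<open>auto intro: inj_on_subset\<close>)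
  moreover have "p.vs2.dim (range (lmap M)) \<le> p.vs2.dim (UNIV :: ('b \<Rightarrow> 'k) set)"
    by (rule p.vs2.dim_subset) simp
  ultimately show ?thesis by (simp add: card_fbasis)
qed

lemma mat_inverse:
  fixes M :: "'a::finite \<Rightarrow> 'b::finite \<Rightarrow> 'k::field"
  assumes i1: "\<forall>c. lmap M c = (\<lambda>_. 0) \<longrightarrow> c = (\<lambda>_. 0)"
    and i2: "\<forall>d. lmap (\<lambda>h b. M b h) d = (\<lambda>_. 0) \<longrightarrow> d = (\<lambda>_. 0)"
  shows "\<exists>N. (\<forall>a a'. (\<Sum>h\<in>UNIV. M a h * N h a') = kd a a') \<and> (\<forall>h h'. (\<Sum>a\<in>UNIV. N h a * M a h') = kd h h')"
proof -
  interpret p: finite_dimensional_vector_space_pair "fscale :: 'k \<Rightarrow> ('a \<Rightarrow> 'k) \<Rightarrow> _" fbasis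
     "fscale :: 'k \<Rightarrow> ('b \<Rightarrow> 'k) \<Rightarrow> _" fbasis
    using ffdvs ffdvs by (simp add: finite_dimensional_vector_space_pair_def)
  have "card (UNIV :: 'a set) = card (UNIV :: 'b set)" using card_le_inj[OF i1] card_le_inj[OF i2] by simp
  hence "surj (lmap M)"
    by (intro p.linear_injective_imp_surjective[OF lmap_linear[where M=M] lmap_inj[OF i1]]) (simp add: card_fbasis)
  hence "\<forall>h. \<exists>c. lmap M c = (\<lambda>h'. kd h h')" by (metis surjD)
  then obtain N where N: "\<And>h. lmap M (N h) = (\<lambda>h'. kd h h')" by metis
  have 2: "(\<Sum>a\<in>UNIV. N h a * M a h') = kd h h'" for h h'
    using N[of h] by (auto simp: lmap_def fun_eq_iff)
  have 1: "(\<Sum>h\<in>UNIV. M a h * N h a') = kd a a'" for a a'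
  proof -
    have "lmap M (\<lambda>a'. (\<Sum>h\<in>UNIV. M a h * N h a') - kd a a') = (\<lambda>_. 0)"
    proof
      fix h'
      have "(\<Sum>a'\<in>UNIV. (\<Sum>h\<in>UNIV. M a h * N h a') * M a' h') = (\<Sum>a'\<in>UNIV. \<Sum>h\<in>UNIV. M a h * (N h a' * M a' h'))"
        by (simp add: sum_distrib_right mult.assoc)
      also have "\<dots> = (\<Sum>h\<in>UNIV. \<Sum>a'\<in>UNIV. M a h * (N h a' * M a' h'))" by (rule sum.swap)
      also have "\<dots> = (\<Sum>h\<in>UNIV. M a h * (\<Sum>a'\<in>UNIV. N h a' * M a' h'))" by (simp add: sum_distrib_left)
      also have "\<dots> = M a h'" by (simp add: 2)
      finally show "lmap M (\<lambda>a'. (\<Sum>h\<in>UNIV. M a h * N h a') - kd a a') h' = 0"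
        by (simp add: lmap_def left_diff_distrib sum_subtractf)
    qed
    with i1 have "(\<lambda>a'. (\<Sum>h\<in>UNIV. M a h * N h a') - kd a a') = (\<lambda>_. 0)" by blast
    thus ?thesis by (simp add: fun_eq_iff)
  qed
  show ?thesis using 1 2 by blast
qed

definition eps :: "('b::finite, 'k::field) hopf \<Rightarrow> ('l::finite, 'k) hopf \<Rightarrow> 'b \<Rightarrow> 'l \<Rightarrow> 'k" where
  "eps B L = (\<lambda>b h. hcou B b * hcou L h)"

definition isinv :: "('b::finite, 'k::field) hopf \<Rightarrow> ('l::finite, 'k) hopf \<Rightarrow> ('b \<Rightarrow> 'l \<Rightarrow> 'k) \<Rightarrow> ('b \<Rightarrow> 'l \<Rightarrow> 'k) \<Rightarrow> bool" where
  "isinv B L P Q \<longleftrightarrow> pconv B L Q P = eps B L \<and> pconv B L P Q = eps B L"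

lemma pinv_alt: "pinv B L P = (THE Q. isinv B L P Q)"
  unfolding pinv_def isinv_def eps_def ..

definition coalg :: "('i::finite, 'k::field) hopf \<Rightarrow> bool" where
  "coalg H \<longleftrightarrow>
    (\<forall>a x y z. (\<Sum>e\<in>UNIV. hcom H a e z * hcom H e x y) = (\<Sum>e\<in>UNIV. hcom H a x e * hcom H e y z)) \<and>
    (\<forall>a b. (\<Sum>e\<in>UNIV. hcom H a e b * hcou H e) = kd a b \<and> (\<Sum>e\<in>UNIV. hcom H a b e * hcou H e) = kd a b)"

lemma hopf_coalg: "hopf_alg H \<Longrightarrow> coalg H"
  unfolding hopf_alg_def coalg_def by blast

lemma pconv_assoc:
  assumes B: "coalg B" and L: "coalg L"
  shows "pconv B L f (pconv B L g k) = pconv B L (pconv B L f g) k"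
proof (intro ext)
  fix b h
  have cB: "\<And>a x y z. (\<Sum>e\<in>UNIV. hcom B a e z * hcom B e x y) = (\<Sum>e\<in>UNIV. hcom B a x e * hcom B e y z)"
    using B unfolding coalg_def by blast
  have cL: "\<And>a x y z. (\<Sum>e\<in>UNIV. hcom L a e z * hcom L e x y) = (\<Sum>e\<in>UNIV. hcom L a x e * hcom L e y z)"
    using L unfolding coalg_def by blast
  have "pconv B L f (pconv B L g k) b h = 
    (\<Sum>b1\<in>UNIV. \<Sum>c1\<in>UNIV. \<Sum>c2\<in>UNIV. \<Sum>h1\<in>UNIV. \<Sum>d1\<in>UNIV. \<Sum>d2\<in>UNIV.
      (\<Sum>e\<in>UNIV. hcom B b b1 e * hcom B e c1 c2) * (\<Sum>e\<in>UNIV. hcom L h h1 e * hcom L e d1 d2) * f b1 h1 * g c1 d1 * k c2 d2)"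
    unfolding pconv_def
    apply (simp only: sum_distrib_left sum_distrib_right sum.cartesian_product UNIV_Times_UNIV)
    apply (rule sum.reindex_bij_witness[where j="\<lambda>(b1,b2,h1,h2,(c1,c2,d1,d2)). (b1,c1,c2,h1,d1,d2,(h2,b2))"
        and i="\<lambda>(b1,c1,c2,h1,d1,d2,(eL,eB)). (b1, eB, h1, eL, (c1,c2,d1,d2))"])
    by (auto simp: mult_ac)
  also have "\<dots> = (\<Sum>b1\<in>UNIV. \<Sum>c1\<in>UNIV. \<Sum>c2\<in>UNIV. \<Sum>h1\<in>UNIV. \<Sum>d1\<in>UNIV. \<Sum>d2\<in>UNIV.
      (\<Sum>e\<in>UNIV. hcom B b e c2 * hcom B e b1 c1) * (\<Sum>e\<in>UNIV. hcom L h e d2 * hcom L e h1 d1) * f b1 h1 * g c1 d1 * k c2 d2)"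
    by (simp only: cB cL)
  also have "\<dots> = pconv B L (pconv B L f g) k b h"
    unfolding pconv_def
    apply (simp only: sum_distrib_left sum_distrib_right sum.cartesian_product UNIV_Times_UNIV)
    apply (rule sum.reindex_bij_witness[where i="\<lambda>(B12,B3,H12,H3,(x1,x2,y1,y2)). (x1,x2,B3,y1,y2,H3,(H12,B12))"
        and j="\<lambda>(b1,c1,c2,h1,d1,d2,(eL,eB)). (eB,c2,eL,d2,(b1,c1,h1,d1))"])
    by (auto simp: mult_ac)
  finally show "pconv B L f (pconv B L g k) b h = pconv B L (pconv B L f g) k b h" .
qed

lemma pconv_eps_left:
  assumes B: "coalg B" and L: "coalg L"
  shows "pconv B L (eps B L) f = f"
proof (intro ext)
  fix b h
  have cB: "\<And>a b. (\<Sum>e\<in>UNIV. hcom B a e b * hcou B e) = kd a b"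
    using B unfolding coalg_def by blast
  have cL: "\<And>a b. (\<Sum>e\<in>UNIV. hcom L a e b * hcou L e) = kd a b"
    using L unfolding coalg_def by blast
  have "pconv B L (eps B L) f b h = (\<Sum>b2\<in>UNIV. \<Sum>h2\<in>UNIV.
      (\<Sum>e\<in>UNIV. hcom B b e b2 * hcou B e) * (\<Sum>e\<in>UNIV. hcom L h e h2 * hcou L e) * f b2 h2)"
    unfolding pconv_def eps_def
    apply (simp only: sum_distrib_left sum_distrib_right sum.cartesian_product UNIV_Times_UNIV)
    apply (rule sum.reindex_bij_witness[where i="\<lambda>(b2,h2,(h1,b1)). (b1,b2,h1,h2)" and j="\<lambda>(b1,b2,h1,h2). (b2,h2,(h1,b1))"])
    by (auto simp: mult_ac)
  also have "\<dots> = f b h" by (simp add: cB cL kd_simps)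
  finally show "pconv B L (eps B L) f b h = f b h" .
qed

lemma pconv_eps_right:
  assumes B: "coalg B" and L: "coalg L"
  shows "pconv B L f (eps B L) = f"
proof (intro ext)
  fix b h
  have cB: "\<And>a b. (\<Sum>e\<in>UNIV. hcom B a b e * hcou B e) = kd a b"
    using B unfolding coalg_def by blast
  have cL: "\<And>a b. (\<Sum>e\<in>UNIV. hcom L a b e * hcou L e) = kd a b"
    using L unfolding coalg_def by blast
  have "pconv B L f (eps B L) b h = (\<Sum>b2\<in>UNIV. \<Sum>h2\<in>UNIV.
      (\<Sum>e\<in>UNIV. hcom B b b2 e * hcou B e) * (\<Sum>e\<in>UNIV. hcom L h h2 e * hcou L e) * f b2 h2)"
    unfolding pconv_def eps_def
    apply (simp only: sum_distrib_left sum_distrib_right sum.cartesian_product UNIV_Times_UNIV)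
    apply (rule sum.reindex_bij_witness[where i="\<lambda>(x,y,(n,na)). (x,na,y,n)" and j="\<lambda>(b1,b2,h1,h2). (b1,h1,(h2,b2))"])
    by (auto simp: mult_ac)
  also have "\<dots> = f b h" by (simp add: cB cL kd_simps)
  finally show "pconv B L f (eps B L) b h = f b h" .
qed

lemma isinv_unique:
  assumes B: "coalg B" and L: "coalg L" and 1: "isinv B L P Q1" and 2: "isinv B L P Q2"
  shows "Q1 = Q2"
proof -
  have "Q1 = pconv B L Q1 (pconv B L P Q2)" using 2 pconv_eps_right[OF B L] unfolding isinv_def by simp
  also have "\<dots> = pconv B L (pconv B L Q1 P) Q2" by (rule pconv_assoc[OF B L])
  also have "\<dots> = Q2" using 1 pconv_eps_left[OF B L] unfolding isinv_def by simp
  finally show ?thesis .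
qed

lemma pinv_eq:
  assumes B: "coalg B" and L: "coalg L" and 1: "isinv B L P Q"
  shows "pinv B L P = Q"
  unfolding pinv_alt using isinv_unique[OF B L 1] 1 by (intro the_equality) blast+

lemma skew_isinv:
  assumes H: "hopf_alg B"
    and SK1: "\<And>b b' h. (\<Sum>c\<in>UNIV. hmul B b b' c * P c h) = (\<Sum>h1\<in>UNIV. \<Sum>h2\<in>UNIV. hcom L h h1 h2 * P b h1 * P b' h2)"
    and SKu: "\<And>h. (\<Sum>c\<in>UNIV. hone B c * P c h) = hcou L h"
  shows "isinv B L P (\<lambda>b h. \<Sum>b'\<in>UNIV. hant B b b' * P b' h)"
proof -
  have A1: "\<And>a c. (\<Sum>x\<in>UNIV. \<Sum>y\<in>UNIV. hcom B a x y * (\<Sum>z\<in>UNIV. hant B x z * hmul B z y c)) = hcou B a * hone B c"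
   and A2: "\<And>a c. (\<Sum>x\<in>UNIV. \<Sum>y\<in>UNIV. hcom B a x y * (\<Sum>z\<in>UNIV. hant B y z * hmul B x z c)) = hcou B a * hone B c"
    using H unfolding hopf_alg_def by blast+
  have "pconv B L P (\<lambda>b h. \<Sum>b'\<in>UNIV. hant B b b' * P b' h) b h = hcou B b * hcou L h" for b h
  proof -
    have "pconv B L P (\<lambda>b h. \<Sum>b'\<in>UNIV. hant B b b' * P b' h) b h =
      (\<Sum>b1\<in>UNIV. \<Sum>b2\<in>UNIV. \<Sum>b'\<in>UNIV. hcom B b b1 b2 * hant B b2 b' * (\<Sum>h1\<in>UNIV. \<Sum>h2\<in>UNIV. hcom L h h1 h2 * P b1 h1 * P b' h2))"
      unfolding pconv_def
      apply (simp only: sum_distrib_left sum_distrib_right sum.cartesian_product UNIV_Times_UNIV)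
      apply (rule sum.reindex_bij_witness[where i="\<lambda>(b1,b2,b',(h1,h2)). (b1,b2,h1,h2,b')" and j="\<lambda>(b1,b2,h1,h2,n). (b1,b2,n,(h1,h2))"])
      by (auto simp: mult_ac)
    also have "\<dots> = (\<Sum>b1\<in>UNIV. \<Sum>b2\<in>UNIV. \<Sum>b'\<in>UNIV. hcom B b b1 b2 * hant B b2 b' * (\<Sum>c\<in>UNIV. hmul B b1 b' c * P c h))"
      by (simp only: SK1)
    also have "\<dots> = (\<Sum>c\<in>UNIV. (\<Sum>b1\<in>UNIV. \<Sum>b2\<in>UNIV. hcom B b b1 b2 * (\<Sum>z\<in>UNIV. hant B b2 z * hmul B b1 z c)) * P c h)"
      apply (simp only: sum_distrib_left sum_distrib_right sum.cartesian_product UNIV_Times_UNIV)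
      apply (rule sum.reindex_bij_witness[where i="\<lambda>(c,(b1,b2,n)). (b1,b2,n,c)" and j="\<lambda>(b1,b2,b',n). (n,(b1,b2,b'))"])
      by (auto simp: mult_ac)
    also have "\<dots> = hcou B b * hcou L h" by (simp only: A2 mult.assoc sum_distrib_left[symmetric] SKu)
    finally show ?thesis .
  qed
  moreover have "pconv B L (\<lambda>b h. \<Sum>b'\<in>UNIV. hant B b b' * P b' h) P b h = hcou B b * hcou L h" for b h
  proof -
    have "pconv B L (\<lambda>b h. \<Sum>b'\<in>UNIV. hant B b b' * P b' h) P b h =
      (\<Sum>b1\<in>UNIV. \<Sum>b2\<in>UNIV. \<Sum>b'\<in>UNIV. hcom B b b1 b2 * hant B b1 b' * (\<Sum>h1\<in>UNIV. \<Sum>h2\<in>UNIV. hcom L h h1 h2 * P b' h1 * P b2 h2))"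
      unfolding pconv_def
      apply (simp only: sum_distrib_left sum_distrib_right sum.cartesian_product UNIV_Times_UNIV)
      apply (rule sum.reindex_bij_witness[where i="\<lambda>(b1,b2,b',(h1,h2)). (b1,b2,h1,h2,b')" and j="\<lambda>(b1,b2,h1,h2,n). (b1,b2,n,(h1,h2))"])
      by (auto simp: mult_ac)
    also have "\<dots> = (\<Sum>b1\<in>UNIV. \<Sum>b2\<in>UNIV. \<Sum>b'\<in>UNIV. hcom B b b1 b2 * hant B b1 b' * (\<Sum>c\<in>UNIV. hmul B b' b2 c * P c h))"
      by (simp only: SK1)
    also have "\<dots> = (\<Sum>c\<in>UNIV. (\<Sum>b1\<in>UNIV. \<Sum>b2\<in>UNIV. hcom B b b1 b2 * (\<Sum>z\<in>UNIV. hant B b1 z * hmul B z b2 c)) * P c h)"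
      apply (simp only: sum_distrib_left sum_distrib_right sum.cartesian_product UNIV_Times_UNIV)
      apply (rule sum.reindex_bij_witness[where i="\<lambda>(c,(b1,b2,n)). (b1,b2,n,c)" and j="\<lambda>(b1,b2,b',n). (n,(b1,b2,b'))"])
      by (auto simp: mult_ac)
    also have "\<dots> = hcou B b * hcou L h" by (simp only: A1 mult.assoc sum_distrib_left[symmetric] SKu)
    finally show ?thesis .
  qed
  ultimately show ?thesis unfolding isinv_def eps_def by (simp add: fun_eq_iff)
qed

definition cohom :: "('a::finite, 'k::field) hopf \<Rightarrow> ('b::finite, 'k) hopf \<Rightarrow> ('a \<Rightarrow> 'b \<Rightarrow> 'k) \<Rightarrow> bool" where
  "cohom A B \<phi> \<longleftrightarrow>
    (\<forall>a x y. (\<Sum>z\<in>UNIV. \<phi> a z * hcom B z x y) = (\<Sum>c\<in>UNIV. \<Sum>d\<in>UNIV. hcom A a c d * \<phi> c x * \<phi> d y)) \<and>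
    (\<forall>a. (\<Sum>z\<in>UNIV. \<phi> a z * hcou B z) = hcou A a)"

definition alghom :: "('a::finite, 'k::field) hopf \<Rightarrow> ('b::finite, 'k) hopf \<Rightarrow> ('a \<Rightarrow> 'b \<Rightarrow> 'k) \<Rightarrow> bool" where
  "alghom A B \<phi> \<longleftrightarrow>
    (\<forall>a b z. (\<Sum>c\<in>UNIV. hmul A a b c * \<phi> c z) = (\<Sum>x\<in>UNIV. \<Sum>y\<in>UNIV. \<phi> a x * \<phi> b y * hmul B x y z)) \<and>
    (\<forall>z. (\<Sum>a\<in>UNIV. hone A a * \<phi> a z) = hone B z)"

lemma hopf_hom_split: "hopf_hom A B \<phi> \<longleftrightarrow> alghom A B \<phi> \<and> cohom A B \<phi>"
  unfolding hopf_hom_def alghom_def cohom_def by blast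

definition pb :: "('b::finite \<Rightarrow> 'x::finite \<Rightarrow> 'k::field) \<Rightarrow> ('l::finite \<Rightarrow> 'y::finite \<Rightarrow> 'k) \<Rightarrow> ('x \<Rightarrow> 'y \<Rightarrow> 'k) \<Rightarrow> 'b \<Rightarrow> 'l \<Rightarrow> 'k" where
  "pb \<theta> \<psi> F = (\<lambda>b h. \<Sum>x\<in>UNIV. \<Sum>y\<in>UNIV. \<theta> b x * \<psi> h y * F x y)"

definition mm :: "('a::finite \<Rightarrow> 'b::finite \<Rightarrow> 'k::field) \<Rightarrow> ('b \<Rightarrow> 'c \<Rightarrow> 'k) \<Rightarrow> 'a \<Rightarrow> 'c \<Rightarrow> 'k" where
  "mm f g = (\<lambda>a c. \<Sum>b\<in>UNIV. f a b * g b c)"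

lemma pb_pb: "pb a b (pb c d F) = pb (mm a c) (mm b d) F"
proof (intro ext)
  fix u v
  show "pb a b (pb c d F) u v = pb (mm a c) (mm b d) F u v"
    unfolding pb_def mm_def
    apply (simp only: sum_distrib_left sum_distrib_right sum.cartesian_product UNIV_Times_UNIV)
    apply (rule sum.reindex_bij_witness[where i="\<lambda>(X,Y,(n,na)). (na,n,(X,Y))" and j="\<lambda>(x,y,(xa,ya)). (xa,ya,(y,x))"])
    by (auto simp: mult_ac)
qed

lemma pb_kd: "pb kd kd F = F"
  by (simp add: pb_def fun_eq_iff kd_simps)

lemma pconv_pb:
  assumes t: "cohom B B' \<theta>" and p: "cohom L L' \<psi>"
  shows "pconv B L (pb \<theta> \<psi> f) (pb \<theta> \<psi> g) = pb \<theta> \<psi> (pconv B' L' f g)"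
proof (intro ext)
  fix b h
  have ct: "\<And>a x y. (\<Sum>z\<in>UNIV. \<theta> a z * hcom B' z x y) = (\<Sum>c\<in>UNIV. \<Sum>d\<in>UNIV. hcom B a c d * \<theta> c x * \<theta> d y)"
    using t unfolding cohom_def by blast
  have cp: "\<And>a x y. (\<Sum>z\<in>UNIV. \<psi> a z * hcom L' z x y) = (\<Sum>c\<in>UNIV. \<Sum>d\<in>UNIV. hcom L a c d * \<psi> c x * \<psi> d y)"
    using p unfolding cohom_def by blast
  have "pb \<theta> \<psi> (pconv B' L' f g) b h = (\<Sum>x1\<in>UNIV. \<Sum>x2\<in>UNIV. \<Sum>y1\<in>UNIV. \<Sum>y2\<in>UNIV.
     (\<Sum>z\<in>UNIV. \<theta> b z * hcom B' z x1 x2) * (\<Sum>z\<in>UNIV. \<psi> h z * hcom L' z y1 y2) * f x1 y1 * g x2 y2)"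
    unfolding pb_def pconv_def
    apply (simp only: sum_distrib_left sum_distrib_right sum.cartesian_product UNIV_Times_UNIV)
    apply (rule sum.reindex_bij_witness[where i="\<lambda>(x1,x2,y1,y2,(n,na)). (na,n,(x1,x2,y1,y2))" and j="\<lambda>(x,y,(b1,b2,h1,h2)). (b1,b2,h1,h2,(y,x))"])
    by (auto simp: mult_ac)
  also have "\<dots> = (\<Sum>x1\<in>UNIV. \<Sum>x2\<in>UNIV. \<Sum>y1\<in>UNIV. \<Sum>y2\<in>UNIV.
     (\<Sum>c\<in>UNIV. \<Sum>d\<in>UNIV. hcom B b c d * \<theta> c x1 * \<theta> d x2) * (\<Sum>c\<in>UNIV. \<Sum>d\<in>UNIV. hcom L h c d * \<psi> c y1 * \<psi> d y2) * f x1 y1 * g x2 y2)"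
    by (simp only: ct cp)
  also have "\<dots> = pconv B L (pb \<theta> \<psi> f) (pb \<theta> \<psi> g) b h"
    unfolding pb_def pconv_def
    apply (simp only: sum_distrib_left sum_distrib_right sum.cartesian_product UNIV_Times_UNIV)
    apply (rule sum.reindex_bij_witness[where i="\<lambda>(b1,b2,h1,h2,((gx,gy),(fx,fy))). (fx,gx,fy,gy,((h1,h2),(b1,b2)))" and j="\<lambda>(x1,x2,y1,y2,((cL,dL),(cB,dB))). (cB,dB,cL,dL,((x2,y2),(x1,y1)))"])
    by (auto simp: mult_ac)
  finally show "pconv B L (pb \<theta> \<psi> f) (pb \<theta> \<psi> g) b h = pb \<theta> \<psi> (pconv B' L' f g) b h" ..
qed

lemma eps_pb:
  assumes t: "cohom B B' \<theta>" and p: "cohom L L' \<psi>"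
  shows "pb \<theta> \<psi> (eps B' L') = eps B L"
proof (intro ext)
  fix b h
  have "pb \<theta> \<psi> (eps B' L') b h = (\<Sum>x\<in>UNIV. \<theta> b x * hcou B' x) * (\<Sum>y\<in>UNIV. \<psi> h y * hcou L' y)"
    unfolding pb_def eps_def sum_product by (simp add: mult_ac)
  also have "\<dots> = eps B L b h" using t p unfolding cohom_def eps_def by simp
  finally show "pb \<theta> \<psi> (eps B' L') b h = eps B L b h" .
qed

lemma isinv_pb:
  assumes t: "cohom B B' \<theta>" and p: "cohom L L' \<psi>" and i: "isinv B' L' P Q"
  shows "isinv B L (pb \<theta> \<psi> P) (pb \<theta> \<psi> Q)"
  using i unfolding isinv_def by (simp add: pconv_pb[OF t p] eps_pb[OF t p])

lemma transport:
  assumes B: "coalg B" and L: "coalg L" and Q: "isinv B L P Q"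
    and ct: "cohom B B' \<theta>" and cp: "cohom L L' \<psi>" and cti: "cohom B' B \<theta>i" and cpi: "cohom L' L \<psi>i"
    and t1: "mm \<theta> \<theta>i = kd" and t2: "mm \<theta>i \<theta> = kd" and p1: "mm \<psi> \<psi>i = kd" and p2: "mm \<psi>i \<psi> = kd"
    and P: "P = pb \<theta> \<psi> P'"
  shows "isinv B' L' P' (pb \<theta>i \<psi>i Q)" and "pinv B' L' P' = pb \<theta>i \<psi>i Q"
proof -
  have P': "P' = pb \<theta>i \<psi>i P" unfolding P pb_pb t2 p2 pb_kd ..
  show i: "isinv B' L' P' (pb \<theta>i \<psi>i Q)" unfolding P' by (rule isinv_pb[OF cti cpi Q])
  have u: "Q1 = pb \<theta>i \<psi>i Q" if "isinv B' L' P' Q1" for Q1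
  proof -
    have "isinv B L P (pb \<theta> \<psi> Q1)" unfolding P by (rule isinv_pb[OF ct cp that])
    hence "pb \<theta> \<psi> Q1 = Q" using isinv_unique[OF B L _ Q] by blast
    hence "pb \<theta>i \<psi>i (pb \<theta> \<psi> Q1) = pb \<theta>i \<psi>i Q" by simp
    thus ?thesis unfolding pb_pb t2 p2 pb_kd .
  qed
  show "pinv B' L' P' = pb \<theta>i \<psi>i Q" unfolding pinv_alt using i u by (intro the_equality) blast+
qed

definition tr :: "('a \<Rightarrow> 'b \<Rightarrow> 'k) \<Rightarrow> 'b \<Rightarrow> 'a \<Rightarrow> 'k" where "tr F = (\<lambda>x y. F y x)"

lemma pconv_tr: "pconv L B (tr f) (tr g) = tr (pconv B L f g)"
  unfolding pconv_def tr_def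
  by (intro ext) (simp only: sum.cartesian_product UNIV_Times_UNIV,
      rule sum.reindex_bij_witness[where i="\<lambda>(a,b,c,d). (c,d,a,b)" and j="\<lambda>(a,b,c,d). (c,d,a,b)"], auto simp: mult_ac)

lemma isinv_tr: "isinv B L P Q \<Longrightarrow> isinv L B (tr P) (tr Q)"
  unfolding isinv_def pconv_tr by (simp add: eps_def tr_def fun_eq_iff mult.commute)

lemma pinv_tr:
  assumes B: "coalg B" and L: "coalg L" and Q: "isinv B L P Q"
  shows "pinv L B (tr P) = tr Q"
proof -
  have "Q1 = tr Q" if "isinv L B (tr P) Q1" for Q1
  proof -
    have "isinv B L P (tr Q1)" using isinv_tr[OF that] by (simp add: tr_def)
    hence "tr Q1 = Q" using isinv_unique[OF B L _ Q] by blast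
    thus ?thesis by (auto simp: tr_def)
  qed
  thus ?thesis unfolding pinv_alt using isinv_tr[OF Q] by (intro the_equality) blast+
qed

lemma sum_pair: "(\<Sum>c\<in>(UNIV::('a::finite\<times>'b::finite) set). F c) = (\<Sum>a\<in>UNIV. \<Sum>b\<in>UNIV. (F (a,b) :: 'k::comm_monoid_add))"
  by (simp add: sum.cartesian_product)

lemma com2_hom:
  assumes t: "cohom B B' \<theta>"
  shows "(\<Sum>z\<in>UNIV. \<theta> a z * com2 B' z X1 X2 X3) =
     (\<Sum>x1\<in>UNIV. \<Sum>x2\<in>UNIV. \<Sum>x3\<in>UNIV. com2 B a x1 x2 x3 * \<theta> x1 X1 * \<theta> x2 X2 * \<theta> x3 X3)"
proof -
  have ct: "\<And>a x y. (\<Sum>z\<in>UNIV. \<theta> a z * hcom B' z x y) = (\<Sum>c\<in>UNIV. \<Sum>d\<in>UNIV. hcom B a c d * \<theta> c x * \<theta> d y)"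
    using t unfolding cohom_def by blast
  have "(\<Sum>z\<in>UNIV. \<theta> a z * com2 B' z X1 X2 X3) = (\<Sum>e\<in>UNIV. (\<Sum>z\<in>UNIV. \<theta> a z * hcom B' z e X3) * hcom B' e X1 X2)"
    unfolding com2_def
    apply (simp only: sum_distrib_left sum_distrib_right sum.cartesian_product UNIV_Times_UNIV)
    apply (rule sum.reindex_bij_witness[where i="\<lambda>(e,n). (n,e)" and j="\<lambda>(e,n). (n,e)"])
    by (auto simp: mult_ac)
  also have "\<dots> = (\<Sum>e\<in>UNIV. (\<Sum>c\<in>UNIV. \<Sum>d\<in>UNIV. hcom B a c d * \<theta> c e * \<theta> d X3) * hcom B' e X1 X2)"
    by (simp only: ct)
  also have "\<dots> = (\<Sum>c\<in>UNIV. \<Sum>d\<in>UNIV. hcom B a c d * (\<Sum>e\<in>UNIV. \<theta> c e * hcom B' e X1 X2) * \<theta> d X3)"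
    apply (simp only: sum_distrib_left sum_distrib_right sum.cartesian_product UNIV_Times_UNIV)
    apply (rule sum.reindex_bij_witness[where i="\<lambda>(c,d,e). (e,c,d)" and j="\<lambda>(e,c,d). (c,d,e)"])
    by (auto simp: mult_ac)
  also have "\<dots> = (\<Sum>c\<in>UNIV. \<Sum>d\<in>UNIV. hcom B a c d * (\<Sum>u\<in>UNIV. \<Sum>v\<in>UNIV. hcom B c u v * \<theta> u X1 * \<theta> v X2) * \<theta> d X3)"
    by (simp only: ct)
  also have "\<dots> = (\<Sum>x1\<in>UNIV. \<Sum>x2\<in>UNIV. \<Sum>x3\<in>UNIV. com2 B a x1 x2 x3 * \<theta> x1 X1 * \<theta> x2 X2 * \<theta> x3 X3)"
    unfolding com2_def
    apply (simp only: sum_distrib_left sum_distrib_right sum.cartesian_product UNIV_Times_UNIV)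
    apply (rule sum.reindex_bij_witness[where i="\<lambda>(x1,x2,x3,e). (e,x3,x1,x2)" and j="\<lambda>(c,d,u,v). (u,v,d,c)"])
    by (auto simp: mult_ac)
  finally show ?thesis .
qed

lemma F_mul:
  assumes at: "alghom B B' \<theta>" and ap: "alghom L L' \<psi>" and ct: "cohom B B' \<theta>" and cp: "cohom L L' \<psi>"
    and hP: "P = pb \<theta> \<psi> P'" and hQ: "pinv B L P = pb \<theta> \<psi> (pinv B' L' P')"
  shows "(\<Sum>c1\<in>UNIV. \<Sum>c2\<in>UNIV. gd_mul B L P (b,h) (b',h') (c1,c2) * (\<theta> c1 x * \<psi> c2 y))
   = (\<Sum>u\<in>UNIV. \<Sum>v\<in>UNIV. \<Sum>u2\<in>UNIV. \<Sum>v2\<in>UNIV. (\<theta> b u * \<psi> h v) * (\<theta> b' u2 * \<psi> h' v2) * gd_mul B' L' P' (u,v) (u2,v2) (x,y))"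
proof -
  define Q where "Q = pinv B L P"
  define Q' where "Q' = pinv B' L' P'"
  have hQ': "Q = pb \<theta> \<psi> Q'" unfolding Q_def Q'_def by (rule hQ)
  have am: "\<And>a b z. (\<Sum>c\<in>UNIV. hmul B a b c * \<theta> c z) = (\<Sum>x\<in>UNIV. \<Sum>y\<in>UNIV. \<theta> a x * \<theta> b y * hmul B' x y z)"
    using at unfolding alghom_def by blast
  have pm: "\<And>a b z. (\<Sum>c\<in>UNIV. hmul L a b c * \<psi> c z) = (\<Sum>x\<in>UNIV. \<Sum>y\<in>UNIV. \<psi> a x * \<psi> b y * hmul L' x y z)"
    using ap unfolding alghom_def by blast
  have "(\<Sum>c1\<in>UNIV. \<Sum>c2\<in>UNIV. gd_mul B L P (b,h) (b',h') (c1,c2) * (\<theta> c1 x * \<psi> c2 y)) =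
    (\<Sum>x1\<in>UNIV. \<Sum>x2\<in>UNIV. \<Sum>x3\<in>UNIV. \<Sum>y1\<in>UNIV. \<Sum>y2\<in>UNIV. \<Sum>y3\<in>UNIV.
      com2 B b' x1 x2 x3 * com2 L h y1 y2 y3 * P x1 y1 * Q x3 y3 *
      (\<Sum>c1\<in>UNIV. hmul B b x2 c1 * \<theta> c1 x) * (\<Sum>c2\<in>UNIV. hmul L y2 h' c2 * \<psi> c2 y))"
    unfolding gd_mul_def Q_def[symmetric] prod.case
    apply (simp only: sum_distrib_left sum_distrib_right sum.cartesian_product UNIV_Times_UNIV)
    apply (rule sum.reindex_bij_witness[where i="\<lambda>(x1,x2,x3,y1,y2,y3,c2,c1). (c1,c2,x1,x2,x3,y1,y2,y3)" and j="\<lambda>(c1,c2,x1,x2,x3,y1,y2,y3). (x1,x2,x3,y1,y2,y3,c2,c1)"])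
    by (auto simp: mult_ac)
  also have "\<dots> = (\<Sum>x1\<in>UNIV. \<Sum>x2\<in>UNIV. \<Sum>x3\<in>UNIV. \<Sum>y1\<in>UNIV. \<Sum>y2\<in>UNIV. \<Sum>y3\<in>UNIV.
      com2 B b' x1 x2 x3 * com2 L h y1 y2 y3 * P x1 y1 * Q x3 y3 *
      (\<Sum>u\<in>UNIV. \<Sum>X2\<in>UNIV. \<theta> b u * \<theta> x2 X2 * hmul B' u X2 x) * (\<Sum>Y2\<in>UNIV. \<Sum>v2\<in>UNIV. \<psi> y2 Y2 * \<psi> h' v2 * hmul L' Y2 v2 y))"
    by (simp only: am pm)
  also have "\<dots> = (\<Sum>x1\<in>UNIV. \<Sum>x2\<in>UNIV. \<Sum>x3\<in>UNIV. \<Sum>y1\<in>UNIV. \<Sum>y2\<in>UNIV. \<Sum>y3\<in>UNIV.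
      com2 B b' x1 x2 x3 * com2 L h y1 y2 y3 * (\<Sum>X1\<in>UNIV. \<Sum>Y1\<in>UNIV. \<theta> x1 X1 * \<psi> y1 Y1 * P' X1 Y1) *
      (\<Sum>X3\<in>UNIV. \<Sum>Y3\<in>UNIV. \<theta> x3 X3 * \<psi> y3 Y3 * Q' X3 Y3) *
      (\<Sum>u\<in>UNIV. \<Sum>X2\<in>UNIV. \<theta> b u * \<theta> x2 X2 * hmul B' u X2 x) * (\<Sum>Y2\<in>UNIV. \<Sum>v2\<in>UNIV. \<psi> y2 Y2 * \<psi> h' v2 * hmul L' Y2 v2 y))"
    by (simp only: hP hQ' pb_def)
  also have "\<dots> = (\<Sum>u\<in>UNIV. \<Sum>v2\<in>UNIV. \<Sum>X1\<in>UNIV. \<Sum>X2\<in>UNIV. \<Sum>X3\<in>UNIV. \<Sum>Y1\<in>UNIV. \<Sum>Y2\<in>UNIV. \<Sum>Y3\<in>UNIV.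
      \<theta> b u * \<psi> h' v2 * 
      (\<Sum>x1\<in>UNIV. \<Sum>x2\<in>UNIV. \<Sum>x3\<in>UNIV. com2 B b' x1 x2 x3 * \<theta> x1 X1 * \<theta> x2 X2 * \<theta> x3 X3) *
      (\<Sum>y1\<in>UNIV. \<Sum>y2\<in>UNIV. \<Sum>y3\<in>UNIV. com2 L h y1 y2 y3 * \<psi> y1 Y1 * \<psi> y2 Y2 * \<psi> y3 Y3) *
      P' X1 Y1 * Q' X3 Y3 * hmul B' u X2 x * hmul L' Y2 v2 y)"
    apply (simp only: sum_distrib_left sum_distrib_right sum.cartesian_product UNIV_Times_UNIV)
    apply (rule sum.reindex_bij_witness[where i="\<lambda>(u,v2,X1,X2,X3,Y1,Y2,Y3,((y1,y2,y3),(x1,x2,x3))). (x1,x2,x3,y1,y2,y3,(Y2,v2),((u,X2),((X3,Y3),(X1,Y1))))"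
       and j="\<lambda>(x1,x2,x3,y1,y2,y3,(Y2,v2),((u,X2),((X3,Y3),(X1,Y1)))). (u,v2,X1,X2,X3,Y1,Y2,Y3,((y1,y2,y3),(x1,x2,x3)))"])
    by (auto simp: mult_ac)
  also have "\<dots> = (\<Sum>u\<in>UNIV. \<Sum>v2\<in>UNIV. \<Sum>X1\<in>UNIV. \<Sum>X2\<in>UNIV. \<Sum>X3\<in>UNIV. \<Sum>Y1\<in>UNIV. \<Sum>Y2\<in>UNIV. \<Sum>Y3\<in>UNIV.
      \<theta> b u * \<psi> h' v2 * 
      (\<Sum>u2\<in>UNIV. \<theta> b' u2 * com2 B' u2 X1 X2 X3) * (\<Sum>v\<in>UNIV. \<psi> h v * com2 L' v Y1 Y2 Y3) *
      P' X1 Y1 * Q' X3 Y3 * hmul B' u X2 x * hmul L' Y2 v2 y)"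
    by (simp only: com2_hom[OF ct] com2_hom[OF cp])
  also have "\<dots> = (\<Sum>u\<in>UNIV. \<Sum>v\<in>UNIV. \<Sum>u2\<in>UNIV. \<Sum>v2\<in>UNIV. (\<theta> b u * \<psi> h v) * (\<theta> b' u2 * \<psi> h' v2) * gd_mul B' L' P' (u,v) (u2,v2) (x,y))"
    unfolding gd_mul_def Q'_def[symmetric] prod.case
    apply (simp only: sum_distrib_left sum_distrib_right sum.cartesian_product UNIV_Times_UNIV)
    apply (rule sum.reindex_bij_witness[where i="\<lambda>(u,v,u2,v2,X1,X2,X3,Y1,Y2,Y3). (u,v2,X1,X2,X3,Y1,Y2,Y3,v,u2)"
       and j="\<lambda>(u,v2,X1,X2,X3,Y1,Y2,Y3,v,u2). (u,v,u2,v2,X1,X2,X3,Y1,Y2,Y3)"])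
    by (auto simp: mult_ac)
  finally show ?thesis .
qed

lemma gd_fields:
  "hmul (gen_double B L P) = gd_mul B L P"
  "hone (gen_double B L P) = (\<lambda>(b, h). hone B b * hone L h)"
  "hcom (gen_double B L P) = (\<lambda>(b, h) (b1, h1) (b2, h2). hcom B b b1 b2 * hcom L h h1 h2)"
  "hcou (gen_double B L P) = (\<lambda>(b, h). hcou B b * hcou L h)"
  unfolding gen_double_def by simp_all

lemma F_hom:
  assumes at: "alghom B B' \<theta>" and ap: "alghom L L' \<psi>" and ct: "cohom B B' \<theta>" and cp: "cohom L L' \<psi>"
    and hP: "P = pb \<theta> \<psi> P'" and hQ: "pinv B L P = pb \<theta> \<psi> (pinv B' L' P')"
  shows "hopf_hom (gen_double B L P) (gen_double B' L' P') (\<lambda>(b,h) (x,y). \<theta> b x * \<psi> h y)"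
proof -
  have au: "\<And>z. (\<Sum>a\<in>UNIV. hone B a * \<theta> a z) = hone B' z" using at unfolding alghom_def by blast
  have pu: "\<And>z. (\<Sum>a\<in>UNIV. hone L a * \<psi> a z) = hone L' z" using ap unfolding alghom_def by blast
  have cc: "\<And>a x y. (\<Sum>z\<in>UNIV. \<theta> a z * hcom B' z x y) = (\<Sum>c\<in>UNIV. \<Sum>d\<in>UNIV. hcom B a c d * \<theta> c x * \<theta> d y)"
     and ce: "\<And>a. (\<Sum>z\<in>UNIV. \<theta> a z * hcou B' z) = hcou B a"
    using ct unfolding cohom_def by blast+
  have pc: "\<And>a x y. (\<Sum>z\<in>UNIV. \<psi> a z * hcom L' z x y) = (\<Sum>c\<in>UNIV. \<Sum>d\<in>UNIV. hcom L a c d * \<psi> c x * \<psi> d y)"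
     and pe: "\<And>a. (\<Sum>z\<in>UNIV. \<psi> a z * hcou L' z) = hcou L a"
    using cp unfolding cohom_def by blast+
  show ?thesis unfolding hopf_hom_def gd_fields
  proof (intro conjI; simp only: split_paired_All sum_pair prod.case; intro allI)
    show "(\<Sum>c1\<in>UNIV. \<Sum>c2\<in>UNIV. gd_mul B L P (b,h) (b',h') (c1,c2) * (\<theta> c1 x * \<psi> c2 y))
   = (\<Sum>u\<in>UNIV. \<Sum>v\<in>UNIV. \<Sum>u2\<in>UNIV. \<Sum>v2\<in>UNIV. (\<theta> b u * \<psi> h v) * (\<theta> b' u2 * \<psi> h' v2) * gd_mul B' L' P' (u,v) (u2,v2) (x,y))"
      for b h b' h' x y by (rule F_mul[OF at ap ct cp hP hQ])
    show "(\<Sum>a\<in>UNIV. \<Sum>b\<in>UNIV. hone B a * hone L b * (\<theta> a x * \<psi> b y)) = hone B' x * hone L' y" for x y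
      by (simp only: au[symmetric] pu[symmetric] sum_product) (simp add: mult_ac)
    show "(\<Sum>a\<in>UNIV. \<Sum>b\<in>UNIV. \<theta> c a * \<psi> d b * (hcou B' a * hcou L' b)) = hcou B c * hcou L d" for c d
      by (simp only: ce[symmetric] pe[symmetric] sum_product) (simp add: mult_ac)
    show "(\<Sum>a\<in>UNIV. \<Sum>b\<in>UNIV. \<theta> u a * \<psi> v b * (hcom B' a x1 x2 * hcom L' b y1 y2)) =
       (\<Sum>c1\<in>UNIV. \<Sum>c2\<in>UNIV. \<Sum>d1\<in>UNIV. \<Sum>d2\<in>UNIV. hcom B u c1 d1 * hcom L v c2 d2 * (\<theta> c1 x1 * \<psi> c2 y1) * (\<theta> d1 x2 * \<psi> d2 y2))"
      for u v x1 x2 y1 y2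
    proof -
      have "(\<Sum>a\<in>UNIV. \<Sum>b\<in>UNIV. \<theta> u a * \<psi> v b * (hcom B' a x1 x2 * hcom L' b y1 y2)) =
        (\<Sum>a\<in>UNIV. \<theta> u a * hcom B' a x1 x2) * (\<Sum>b\<in>UNIV. \<psi> v b * hcom L' b y1 y2)"
        by (simp only: sum_product) (simp add: mult_ac)
      also have "\<dots> = (\<Sum>c\<in>UNIV. \<Sum>d\<in>UNIV. hcom B u c d * \<theta> c x1 * \<theta> d x2) * (\<Sum>c\<in>UNIV. \<Sum>d\<in>UNIV. hcom L v c d * \<psi> c y1 * \<psi> d y2)"
        by (simp only: cc pc)
      also have "\<dots> = (\<Sum>c1\<in>UNIV. \<Sum>c2\<in>UNIV. \<Sum>d1\<in>UNIV. \<Sum>d2\<in>UNIV. hcom B u c1 d1 * hcom L v c2 d2 * (\<theta> c1 x1 * \<psi> c2 y1) * (\<theta> d1 x2 * \<psi> d2 y2))"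
        apply (simp only: sum_distrib_left sum_distrib_right sum.cartesian_product UNIV_Times_UNIV)
        apply (rule sum.reindex_bij_witness[where i="\<lambda>(c1,c2,d1,d2). ((c2,d2),(c1,d1))" and j="\<lambda>((cL,dL),(cB,dB)). (cB,cL,dB,dL)"])
        by (auto simp: mult_ac)
      finally show ?thesis .
    qed
  qed
qed

lemma hop_fields:
  "hmul (hop A) = (\<lambda>a b c. hmul A b a c)" "hone (hop A) = hone A" "hcom (hop A) = hcom A" "hcou (hop A) = hcou A"
  unfolding hop_def by simp_all

lemma F_swap_mul:
  assumes at: "alghom B (hop L') \<theta>" and ap: "alghom L (hop B') \<psi>" and ct: "cohom B L' \<theta>" and cp: "cohom L B' \<psi>"
    and hP: "P = tr (pb \<psi> \<theta> P')" and hQ: "pinv B L P = tr (pb \<psi> \<theta> (pinv B' L' P'))"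
  shows "(\<Sum>c1\<in>UNIV. \<Sum>c2\<in>UNIV. gd_mul B L P (b,h) (b',h') (c1,c2) * (\<psi> c2 z1 * \<theta> c1 z2))
   = (\<Sum>p1\<in>UNIV. \<Sum>p2\<in>UNIV. \<Sum>q1\<in>UNIV. \<Sum>q2\<in>UNIV. (\<psi> h p1 * \<theta> b p2) * (\<psi> h' q1 * \<theta> b' q2) * gd_mul B' L' P' (q1,q2) (p1,p2) (z1,z2))"
proof -
  define Q where "Q = pinv B L P"
  define Q' where "Q' = pinv B' L' P'"
  have hQ': "Q = tr (pb \<psi> \<theta> Q')" unfolding Q_def Q'_def by (rule hQ)
  have am: "\<And>a b z. (\<Sum>c\<in>UNIV. hmul B a b c * \<theta> c z) = (\<Sum>x\<in>UNIV. \<Sum>y\<in>UNIV. \<theta> a x * \<theta> b y * hmul L' y x z)"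
    using at unfolding alghom_def hop_fields by blast
  have pm: "\<And>a b z. (\<Sum>c\<in>UNIV. hmul L a b c * \<psi> c z) = (\<Sum>x\<in>UNIV. \<Sum>y\<in>UNIV. \<psi> a x * \<psi> b y * hmul B' y x z)"
    using ap unfolding alghom_def hop_fields by blast
  have "(\<Sum>c1\<in>UNIV. \<Sum>c2\<in>UNIV. gd_mul B L P (b,h) (b',h') (c1,c2) * (\<psi> c2 z1 * \<theta> c1 z2)) =
    (\<Sum>x1\<in>UNIV. \<Sum>x2\<in>UNIV. \<Sum>x3\<in>UNIV. \<Sum>y1\<in>UNIV. \<Sum>y2\<in>UNIV. \<Sum>y3\<in>UNIV.
      com2 B b' x1 x2 x3 * com2 L h y1 y2 y3 * P x1 y1 * Q x3 y3 *
      (\<Sum>c1\<in>UNIV. hmul B b x2 c1 * \<theta> c1 z2) * (\<Sum>c2\<in>UNIV. hmul L y2 h' c2 * \<psi> c2 z1))"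
    unfolding gd_mul_def Q_def[symmetric] prod.case
    apply (simp only: sum_distrib_left sum_distrib_right sum.cartesian_product UNIV_Times_UNIV)
    apply (rule sum.reindex_bij_witness[where i="\<lambda>(x1,x2,x3,y1,y2,y3,c2,c1). (c1,c2,x1,x2,x3,y1,y2,y3)" and j="\<lambda>(c1,c2,x1,x2,x3,y1,y2,y3). (x1,x2,x3,y1,y2,y3,c2,c1)"])
    by (auto simp: mult_ac)
  also have "\<dots> = (\<Sum>x1\<in>UNIV. \<Sum>x2\<in>UNIV. \<Sum>x3\<in>UNIV. \<Sum>y1\<in>UNIV. \<Sum>y2\<in>UNIV. \<Sum>y3\<in>UNIV.
      com2 B b' x1 x2 x3 * com2 L h y1 y2 y3 * P x1 y1 * Q x3 y3 *
      (\<Sum>u\<in>UNIV. \<Sum>Y2\<in>UNIV. \<theta> b u * \<theta> x2 Y2 * hmul L' Y2 u z2) * (\<Sum>X2\<in>UNIV. \<Sum>v\<in>UNIV. \<psi> y2 X2 * \<psi> h' v * hmul B' v X2 z1))"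
    by (simp only: am pm)
  also have "\<dots> = (\<Sum>x1\<in>UNIV. \<Sum>x2\<in>UNIV. \<Sum>x3\<in>UNIV. \<Sum>y1\<in>UNIV. \<Sum>y2\<in>UNIV. \<Sum>y3\<in>UNIV.
      com2 B b' x1 x2 x3 * com2 L h y1 y2 y3 * (\<Sum>X1\<in>UNIV. \<Sum>Y1\<in>UNIV. \<psi> y1 X1 * \<theta> x1 Y1 * P' X1 Y1) *
      (\<Sum>X3\<in>UNIV. \<Sum>Y3\<in>UNIV. \<psi> y3 X3 * \<theta> x3 Y3 * Q' X3 Y3) *
      (\<Sum>u\<in>UNIV. \<Sum>Y2\<in>UNIV. \<theta> b u * \<theta> x2 Y2 * hmul L' Y2 u z2) * (\<Sum>X2\<in>UNIV. \<Sum>v\<in>UNIV. \<psi> y2 X2 * \<psi> h' v * hmul B' v X2 z1))"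
    by (simp only: hP hQ' pb_def tr_def)
  also have "\<dots> = (\<Sum>u\<in>UNIV. \<Sum>v\<in>UNIV. \<Sum>X1\<in>UNIV. \<Sum>X2\<in>UNIV. \<Sum>X3\<in>UNIV. \<Sum>Y1\<in>UNIV. \<Sum>Y2\<in>UNIV. \<Sum>Y3\<in>UNIV.
      \<theta> b u * \<psi> h' v * 
      (\<Sum>y1\<in>UNIV. \<Sum>y2\<in>UNIV. \<Sum>y3\<in>UNIV. com2 L h y1 y2 y3 * \<psi> y1 X1 * \<psi> y2 X2 * \<psi> y3 X3) *
      (\<Sum>x1\<in>UNIV. \<Sum>x2\<in>UNIV. \<Sum>x3\<in>UNIV. com2 B b' x1 x2 x3 * \<theta> x1 Y1 * \<theta> x2 Y2 * \<theta> x3 Y3) *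
      P' X1 Y1 * Q' X3 Y3 * hmul B' v X2 z1 * hmul L' Y2 u z2)"
    apply (simp only: sum_distrib_left sum_distrib_right sum.cartesian_product UNIV_Times_UNIV)
    apply (rule sum.reindex_bij_witness[where i="\<lambda>(u,v,X1,X2,X3,Y1,Y2,Y3,((x1,x2,x3),(y1,y2,y3))). (x1,x2,x3,y1,y2,y3,(X2,v),((u,Y2),((X3,Y3),(X1,Y1))))"
       and j="\<lambda>(x1,x2,x3,y1,y2,y3,(X2,v),((u,Y2),((X3,Y3),(X1,Y1)))). (u,v,X1,X2,X3,Y1,Y2,Y3,((x1,x2,x3),(y1,y2,y3)))"])
    by (auto simp: mult_ac)
  also have "\<dots> = (\<Sum>u\<in>UNIV. \<Sum>v\<in>UNIV. \<Sum>X1\<in>UNIV. \<Sum>X2\<in>UNIV. \<Sum>X3\<in>UNIV. \<Sum>Y1\<in>UNIV. \<Sum>Y2\<in>UNIV. \<Sum>Y3\<in>UNIV.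
      \<theta> b u * \<psi> h' v * 
      (\<Sum>p1\<in>UNIV. \<psi> h p1 * com2 B' p1 X1 X2 X3) * (\<Sum>q2\<in>UNIV. \<theta> b' q2 * com2 L' q2 Y1 Y2 Y3) *
      P' X1 Y1 * Q' X3 Y3 * hmul B' v X2 z1 * hmul L' Y2 u z2)"
    by (simp only: com2_hom[OF ct] com2_hom[OF cp])
  also have "\<dots> = (\<Sum>p1\<in>UNIV. \<Sum>p2\<in>UNIV. \<Sum>q1\<in>UNIV. \<Sum>q2\<in>UNIV. (\<psi> h p1 * \<theta> b p2) * (\<psi> h' q1 * \<theta> b' q2) * gd_mul B' L' P' (q1,q2) (p1,p2) (z1,z2))"
    unfolding gd_mul_def Q'_def[symmetric] prod.case
    apply (simp only: sum_distrib_left sum_distrib_right sum.cartesian_product UNIV_Times_UNIV)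
    apply (rule sum.reindex_bij_witness[where i="\<lambda>(p1,p2,q1,q2,X1,X2,X3,Y1,Y2,Y3). (p2,q1,X1,X2,X3,Y1,Y2,Y3,q2,p1)"
       and j="\<lambda>(u,v,X1,X2,X3,Y1,Y2,Y3,q2,p1). (p1,u,v,q2,X1,X2,X3,Y1,Y2,Y3)"])
    by (auto simp: mult_ac)
  finally show ?thesis .
qed

lemma F_swap_hom:
  assumes at: "alghom B (hop L') \<theta>" and ap: "alghom L (hop B') \<psi>" and ct: "cohom B L' \<theta>" and cp: "cohom L B' \<psi>"
    and hP: "P = tr (pb \<psi> \<theta> P')" and hQ: "pinv B L P = tr (pb \<psi> \<theta> (pinv B' L' P'))"
  shows "hopf_hom (gen_double B L P) (hop (gen_double B' L' P')) (\<lambda>(b,h) (x,y). \<psi> h x * \<theta> b y)"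
proof -
  have au: "\<And>z. (\<Sum>a\<in>UNIV. hone B a * \<theta> a z) = hone L' z" using at unfolding alghom_def hop_fields by blast
  have pu: "\<And>z. (\<Sum>a\<in>UNIV. hone L a * \<psi> a z) = hone B' z" using ap unfolding alghom_def hop_fields by blast
  have cc: "\<And>a x y. (\<Sum>z\<in>UNIV. \<theta> a z * hcom L' z x y) = (\<Sum>c\<in>UNIV. \<Sum>d\<in>UNIV. hcom B a c d * \<theta> c x * \<theta> d y)"
     and ce: "\<And>a. (\<Sum>z\<in>UNIV. \<theta> a z * hcou L' z) = hcou B a"
    using ct unfolding cohom_def by blast+
  have pc: "\<And>a x y. (\<Sum>z\<in>UNIV. \<psi> a z * hcom B' z x y) = (\<Sum>c\<in>UNIV. \<Sum>d\<in>UNIV. hcom L a c d * \<psi> c x * \<psi> d y)"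
     and pe: "\<And>a. (\<Sum>z\<in>UNIV. \<psi> a z * hcou B' z) = hcou L a"
    using cp unfolding cohom_def by blast+
  show ?thesis unfolding hopf_hom_def gd_fields hop_fields
  proof (intro conjI; simp only: split_paired_All sum_pair prod.case; intro allI)
    show "(\<Sum>c1\<in>UNIV. \<Sum>c2\<in>UNIV. gd_mul B L P (b,h) (b',h') (c1,c2) * (\<psi> c2 z1 * \<theta> c1 z2))
   = (\<Sum>p1\<in>UNIV. \<Sum>p2\<in>UNIV. \<Sum>q1\<in>UNIV. \<Sum>q2\<in>UNIV. (\<psi> h p1 * \<theta> b p2) * (\<psi> h' q1 * \<theta> b' q2) * gd_mul B' L' P' (q1,q2) (p1,p2) (z1,z2))"
      for b h b' h' z1 z2 by (rule F_swap_mul[OF at ap ct cp hP hQ])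
    show "(\<Sum>a\<in>UNIV. \<Sum>b\<in>UNIV. hone B a * hone L b * (\<psi> b x * \<theta> a y)) = hone B' x * hone L' y" for x y
      by (simp only: au[symmetric] pu[symmetric] sum_product) (subst sum.swap, simp add: mult_ac)
    show "(\<Sum>a\<in>UNIV. \<Sum>b\<in>UNIV. \<psi> d a * \<theta> c b * (hcou B' a * hcou L' b)) = hcou B c * hcou L d" for c d
      by (simp only: ce[symmetric] pe[symmetric] sum_product) (subst sum.swap, simp add: mult_ac)
    show "(\<Sum>a\<in>UNIV. \<Sum>b\<in>UNIV. \<psi> v a * \<theta> u b * (hcom B' a x1 x2 * hcom L' b y1 y2)) =
       (\<Sum>c1\<in>UNIV. \<Sum>c2\<in>UNIV. \<Sum>d1\<in>UNIV. \<Sum>d2\<in>UNIV. hcom B u c1 d1 * hcom L v c2 d2 * (\<psi> c2 x1 * \<theta> c1 y1) * (\<psi> d2 x2 * \<theta> d1 y2))"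
      for u v x1 x2 y1 y2
    proof -
      have "(\<Sum>a\<in>UNIV. \<Sum>b\<in>UNIV. \<psi> v a * \<theta> u b * (hcom B' a x1 x2 * hcom L' b y1 y2)) =
        (\<Sum>a\<in>UNIV. \<psi> v a * hcom B' a x1 x2) * (\<Sum>b\<in>UNIV. \<theta> u b * hcom L' b y1 y2)"
        by (simp only: sum_product) (simp add: mult_ac)
      also have "\<dots> = (\<Sum>c\<in>UNIV. \<Sum>d\<in>UNIV. hcom L v c d * \<psi> c x1 * \<psi> d x2) * (\<Sum>c\<in>UNIV. \<Sum>d\<in>UNIV. hcom B u c d * \<theta> c y1 * \<theta> d y2)"
        by (simp only: cc pc)
      also have "\<dots> = (\<Sum>c1\<in>UNIV. \<Sum>c2\<in>UNIV. \<Sum>d1\<in>UNIV. \<Sum>d2\<in>UNIV. hcom B u c1 d1 * hcom L v c2 d2 * (\<psi> c2 x1 * \<theta> c1 y1) * (\<psi> d2 x2 * \<theta> d1 y2))"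
        apply (simp only: sum_distrib_left sum_distrib_right sum.cartesian_product UNIV_Times_UNIV)
        apply (rule sum.reindex_bij_witness[where i="\<lambda>(c1,c2,d1,d2). ((c1,d1),(c2,d2))" and j="\<lambda>((cB,dB),(cL,dL)). (cB,cL,dB,dL)"])
        by (auto simp: mult_ac)
      finally show ?thesis .
    qed
  qed
qed

lemma mm_pt: "mm f g = kd \<Longrightarrow> (\<Sum>b\<in>UNIV. f a b * g b c) = kd a c"
  unfolding mm_def by (drule fun_cong[of _ _ a], drule fun_cong[of _ _ c]) simp

lemma cancel_right:
  fixes F G :: "'a::finite \<Rightarrow> 'k::field"
  assumes i: "mm \<phi> \<psi> = kd" and e: "\<And>w. (\<Sum>z\<in>UNIV. F z * \<phi> z w) = (\<Sum>z\<in>UNIV. G z * \<phi> z w)"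
  shows "F z' = G z'"
proof -
  have r: "F z' = (\<Sum>w\<in>UNIV. (\<Sum>z\<in>UNIV. F z * \<phi> z w) * \<psi> w z')" for F :: "'a \<Rightarrow> 'k"
  proof -
    have "(\<Sum>w\<in>UNIV. (\<Sum>z\<in>UNIV. F z * \<phi> z w) * \<psi> w z') = (\<Sum>z\<in>UNIV. F z * (\<Sum>w\<in>UNIV. \<phi> z w * \<psi> w z'))"
      by (simp only: sum_distrib_left sum_distrib_right mult.assoc) (rule sum.swap)
    thus ?thesis by (simp add: mm_pt[OF i])
  qed
  show ?thesis by (subst r[of F], subst r[of G], simp only: e)
qed

lemma cancel_left:
  fixes F G :: "'a::finite \<Rightarrow> 'k::field"
  assumes i: "mm \<psi> \<phi> = kd" and e: "\<And>v. (\<Sum>a\<in>UNIV. \<phi> v a * F a) = (\<Sum>a\<in>UNIV. \<phi> v a * G a)"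
  shows "F a' = G a'"
proof -
  have r: "F a' = (\<Sum>v\<in>UNIV. \<psi> a' v * (\<Sum>a\<in>UNIV. \<phi> v a * F a))" for F :: "'a \<Rightarrow> 'k"
  proof -
    have "(\<Sum>v\<in>UNIV. \<psi> a' v * (\<Sum>a\<in>UNIV. \<phi> v a * F a)) = (\<Sum>a\<in>UNIV. (\<Sum>v\<in>UNIV. \<psi> a' v * \<phi> v a) * F a)"
      by (simp only: sum_distrib_left sum_distrib_right mult.assoc) (rule sum.swap)
    thus ?thesis by (simp add: mm_pt[OF i])
  qed
  show ?thesis by (subst r[of F], subst r[of G], simp only: e)
qed

lemma inv_alghom:
  assumes h: "alghom A B \<phi>" and i1: "mm \<phi> \<psi> = kd" and i2: "mm \<psi> \<phi> = kd"
  shows "alghom B A \<psi>"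
proof -
  have m: "\<And>a b z. (\<Sum>c\<in>UNIV. hmul A a b c * \<phi> c z) = (\<Sum>x\<in>UNIV. \<Sum>y\<in>UNIV. \<phi> a x * \<phi> b y * hmul B x y z)"
   and u: "\<And>z. (\<Sum>a\<in>UNIV. hone A a * \<phi> a z) = hone B z" using h unfolding alghom_def by blast+
  have "(\<Sum>c\<in>UNIV. hmul B a b c * \<psi> c z) = (\<Sum>x\<in>UNIV. \<Sum>y\<in>UNIV. \<psi> a x * \<psi> b y * hmul A x y z)" for a b z
  proof (rule cancel_right[OF i1, where F="\<lambda>z. \<Sum>c\<in>UNIV. hmul B a b c * \<psi> c z"])
    fix w
    have "(\<Sum>z\<in>UNIV. (\<Sum>c\<in>UNIV. hmul B a b c * \<psi> c z) * \<phi> z w) = (\<Sum>c\<in>UNIV. hmul B a b c * (\<Sum>z\<in>UNIV. \<psi> c z * \<phi> z w))"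
      by (simp only: sum_distrib_left sum_distrib_right mult.assoc) (rule sum.swap)
    also have "\<dots> = hmul B a b w" by (simp add: mm_pt[OF i2])
    also have "\<dots> = (\<Sum>x\<in>UNIV. \<Sum>y\<in>UNIV. (\<Sum>X\<in>UNIV. \<psi> a X * \<phi> X x) * (\<Sum>Y\<in>UNIV. \<psi> b Y * \<phi> Y y) * hmul B x y w)"
      by (simp add: mm_pt[OF i2] kd_simps)
    also have "\<dots> = (\<Sum>X\<in>UNIV. \<Sum>Y\<in>UNIV. \<psi> a X * \<psi> b Y * (\<Sum>x\<in>UNIV. \<Sum>y\<in>UNIV. \<phi> X x * \<phi> Y y * hmul B x y w))"
      apply (simp only: sum_distrib_left sum_distrib_right sum.cartesian_product UNIV_Times_UNIV)
      apply (rule sum.reindex_bij_witness[where i="\<lambda>(X,Y,(x,y)). (x,y,(Y,X))" and j="\<lambda>(x,y,(Y,X)). (X,Y,(x,y))"])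
      by (auto simp: mult_ac)
    also have "\<dots> = (\<Sum>X\<in>UNIV. \<Sum>Y\<in>UNIV. \<psi> a X * \<psi> b Y * (\<Sum>c\<in>UNIV. hmul A X Y c * \<phi> c w))"
      by (simp only: m)
    also have "\<dots> = (\<Sum>z\<in>UNIV. (\<Sum>x\<in>UNIV. \<Sum>y\<in>UNIV. \<psi> a x * \<psi> b y * hmul A x y z) * \<phi> z w)"
      apply (simp only: sum_distrib_left sum_distrib_right sum.cartesian_product UNIV_Times_UNIV)
      apply (rule sum.reindex_bij_witness[where i="\<lambda>(z,(x,y)). (x,y,z)" and j="\<lambda>(x,y,z). (z,(x,y))"])
      by (auto simp: mult_ac)
    finally show "(\<Sum>z\<in>UNIV. (\<Sum>c\<in>UNIV. hmul B a b c * \<psi> c z) * \<phi> z w) = (\<Sum>z\<in>UNIV. (\<Sum>x\<in>UNIV. \<Sum>y\<in>UNIV. \<psi> a x * \<psi> b y * hmul A x y z) * \<phi> z w)" .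
  qed
  moreover have "(\<Sum>a\<in>UNIV. hone B a * \<psi> a z) = hone A z" for z
  proof (rule cancel_right[OF i1, where F="\<lambda>z. \<Sum>a\<in>UNIV. hone B a * \<psi> a z"])
    fix w
    have "(\<Sum>z\<in>UNIV. (\<Sum>a\<in>UNIV. hone B a * \<psi> a z) * \<phi> z w) = (\<Sum>a\<in>UNIV. hone B a * (\<Sum>z\<in>UNIV. \<psi> a z * \<phi> z w))"
      by (simp only: sum_distrib_left sum_distrib_right mult.assoc) (rule sum.swap)
    also have "\<dots> = hone B w" by (simp add: mm_pt[OF i2])
    finally show "(\<Sum>z\<in>UNIV. (\<Sum>a\<in>UNIV. hone B a * \<psi> a z) * \<phi> z w) = (\<Sum>z\<in>UNIV. hone A z * \<phi> z w)" by (simp add: u)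
  qed
  ultimately show ?thesis unfolding alghom_def by blast
qed

lemma inv_cohom:
  assumes h: "cohom A B \<phi>" and i1: "mm \<phi> \<psi> = kd" and i2: "mm \<psi> \<phi> = kd"
  shows "cohom B A \<psi>"
proof -
  have c: "\<And>a x y. (\<Sum>z\<in>UNIV. \<phi> a z * hcom B z x y) = (\<Sum>c\<in>UNIV. \<Sum>d\<in>UNIV. hcom A a c d * \<phi> c x * \<phi> d y)"
   and e: "\<And>a. (\<Sum>z\<in>UNIV. \<phi> a z * hcou B z) = hcou A a" using h unfolding cohom_def by blast+
  have "(\<Sum>z\<in>UNIV. \<psi> a z * hcom A z x y) = (\<Sum>c\<in>UNIV. \<Sum>d\<in>UNIV. hcom B a c d * \<psi> c x * \<psi> d y)" for a x y
  proof (rule cancel_left[OF i2, where F="\<lambda>a. \<Sum>z\<in>UNIV. \<psi> a z * hcom A z x y"])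
    fix v
    have "(\<Sum>a\<in>UNIV. \<phi> v a * (\<Sum>z\<in>UNIV. \<psi> a z * hcom A z x y)) = (\<Sum>z\<in>UNIV. (\<Sum>a\<in>UNIV. \<phi> v a * \<psi> a z) * hcom A z x y)"
      by (simp only: sum_distrib_left sum_distrib_right mult.assoc) (rule sum.swap)
    also have "\<dots> = hcom A v x y" by (simp add: mm_pt[OF i1])
    also have "\<dots> = (\<Sum>X\<in>UNIV. \<Sum>Y\<in>UNIV. hcom A v X Y * (\<Sum>c\<in>UNIV. \<phi> X c * \<psi> c x) * (\<Sum>d\<in>UNIV. \<phi> Y d * \<psi> d y))"
      by (simp add: mm_pt[OF i1] kd_simps)
    also have "\<dots> = (\<Sum>c\<in>UNIV. \<Sum>d\<in>UNIV. (\<Sum>X\<in>UNIV. \<Sum>Y\<in>UNIV. hcom A v X Y * \<phi> X c * \<phi> Y d) * \<psi> c x * \<psi> d y)"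
      apply (simp only: sum_distrib_left sum_distrib_right sum.cartesian_product UNIV_Times_UNIV)
      apply (rule sum.reindex_bij_witness[where i="\<lambda>(c,d,(X,Y)). (X,Y,d,c)" and j="\<lambda>(X,Y,d,c). (c,d,(X,Y))"])
      by (auto simp: mult_ac)
    also have "\<dots> = (\<Sum>c\<in>UNIV. \<Sum>d\<in>UNIV. (\<Sum>z\<in>UNIV. \<phi> v z * hcom B z c d) * \<psi> c x * \<psi> d y)"
      by (simp only: c)
    also have "\<dots> = (\<Sum>a\<in>UNIV. \<phi> v a * (\<Sum>c\<in>UNIV. \<Sum>d\<in>UNIV. hcom B a c d * \<psi> c x * \<psi> d y))"
      apply (simp only: sum_distrib_left sum_distrib_right sum.cartesian_product UNIV_Times_UNIV)
      apply (rule sum.reindex_bij_witness[where i="\<lambda>(a,(c,d)). (c,d,a)" and j="\<lambda>(c,d,a). (a,(c,d))"])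
      by (auto simp: mult_ac)
    finally show "(\<Sum>a\<in>UNIV. \<phi> v a * (\<Sum>z\<in>UNIV. \<psi> a z * hcom A z x y)) = (\<Sum>a\<in>UNIV. \<phi> v a * (\<Sum>c\<in>UNIV. \<Sum>d\<in>UNIV. hcom B a c d * \<psi> c x * \<psi> d y))" .
  qed
  moreover have "(\<Sum>z\<in>UNIV. \<psi> a z * hcou A z) = hcou B a" for a
  proof (rule cancel_left[OF i2, where F="\<lambda>a. \<Sum>z\<in>UNIV. \<psi> a z * hcou A z"])
    fix v
    have "(\<Sum>a\<in>UNIV. \<phi> v a * (\<Sum>z\<in>UNIV. \<psi> a z * hcou A z)) = (\<Sum>z\<in>UNIV. (\<Sum>a\<in>UNIV. \<phi> v a * \<psi> a z) * hcou A z)"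
      by (simp only: sum_distrib_left sum_distrib_right mult.assoc) (rule sum.swap)
    also have "\<dots> = hcou A v" by (simp add: mm_pt[OF i1])
    finally show "(\<Sum>a\<in>UNIV. \<phi> v a * (\<Sum>z\<in>UNIV. \<psi> a z * hcou A z)) = (\<Sum>a\<in>UNIV. \<phi> v a * hcou B a)" by (simp add: e)
  qed
  ultimately show ?thesis unfolding cohom_def by blast
qed

definition dmul :: "('i::finite, 'k::field) hopf \<Rightarrow> ('i \<Rightarrow> 'k) \<Rightarrow> ('i \<Rightarrow> 'k) \<Rightarrow> 'i \<Rightarrow> 'k" where
  "dmul H p p' = (\<lambda>a. \<Sum>x\<in>UNIV. \<Sum>y\<in>UNIV. hcom H a x y * p x * p' y)"

lemma rvec_eq: "rvec R p j = (\<Sum>a\<in>UNIV. R a j * p a)"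
  unfolding rvec_def sigma_def by (simp add: kd_simps)

lemma lvec_eq: "lvec R q i = (\<Sum>b\<in>UNIV. R i b * q b)"
proof -
  have "sigma R (\<lambda>a. kd i a) q = (\<Sum>a\<in>UNIV. kd i a * (\<Sum>b\<in>UNIV. R a b * q b))"
    unfolding sigma_def by (simp add: sum_distrib_left mult_ac)
  thus ?thesis unfolding lvec_def by simp
qed

lemma sigma_r: "sigma R p q = (\<Sum>j\<in>UNIV. rvec R p j * q j)"
  unfolding sigma_def rvec_eq
  by (simp only: sum_distrib_left sum_distrib_right mult_ac) (rule sum.swap)

lemma sigma_l: "sigma R p q = (\<Sum>i\<in>UNIV. p i * lvec R q i)"
  unfolding sigma_def lvec_eq
  by (simp only: sum_distrib_left sum_distrib_right mult_ac)

context
  fixes H :: "('i::finite, 'k::field) hopf" and R :: "'i \<Rightarrow> 'i \<Rightarrow> 'k"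
  assumes H: "hopf_alg H" and QT: "quasitriangular H R"
begin

lemma qt1: "(\<Sum>a\<in>UNIV. R a z * hcom H a x y) = (\<Sum>b\<in>UNIV. \<Sum>d\<in>UNIV. R x b * R y d * hmul H b d z)"
  using QT unfolding quasitriangular_def by blast
lemma qt2: "(\<Sum>a\<in>UNIV. R x a * hcom H a y z) = (\<Sum>a\<in>UNIV. \<Sum>c\<in>UNIV. R a z * R c y * hmul H a c x)"
  using QT unfolding quasitriangular_def by blast

lemma R1: "rvec R (dmul H p p') j = (\<Sum>b\<in>UNIV. \<Sum>d\<in>UNIV. rvec R p b * rvec R p' d * hmul H b d j)"
proof -
  have "rvec R (dmul H p p') j = (\<Sum>x\<in>UNIV. \<Sum>y\<in>UNIV. p x * p' y * (\<Sum>a\<in>UNIV. R a j * hcom H a x y))"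
    unfolding rvec_eq dmul_def
    apply (simp only: sum_distrib_left sum_distrib_right sum.cartesian_product UNIV_Times_UNIV)
    apply (rule sum.reindex_bij_witness[where i="\<lambda>(x,y,a). (a,(x,y))" and j="\<lambda>(a,(x,y)). (x,y,a)"])
    by (auto simp: mult_ac)
  also have "\<dots> = (\<Sum>x\<in>UNIV. \<Sum>y\<in>UNIV. p x * p' y * (\<Sum>b\<in>UNIV. \<Sum>d\<in>UNIV. R x b * R y d * hmul H b d j))"
    by (simp only: qt1)
  also have "\<dots> = (\<Sum>b\<in>UNIV. \<Sum>d\<in>UNIV. rvec R p b * rvec R p' d * hmul H b d j)"
    unfolding rvec_eq
    apply (simp only: sum_distrib_left sum_distrib_right sum.cartesian_product UNIV_Times_UNIV)
    apply (rule sum.reindex_bij_witness[where i="\<lambda>(b,d,(y,x)). (x,y,(b,d))" and j="\<lambda>(x,y,(b,d)). (b,d,(y,x))"])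
    by (auto simp: mult_ac)
  finally show ?thesis .
qed

lemma R2: "(\<Sum>x\<in>UNIV. \<Sum>y\<in>UNIV. lvec R q x * lvec R q' y * hmul H x y i) = lvec R (dmul H q' q) i"
proof -
  have "lvec R (dmul H q' q) i = (\<Sum>y\<in>UNIV. \<Sum>z\<in>UNIV. q' y * q z * (\<Sum>b\<in>UNIV. R i b * hcom H b y z))"
    unfolding lvec_eq dmul_def
    apply (simp only: sum_distrib_left sum_distrib_right sum.cartesian_product UNIV_Times_UNIV)
    apply (rule sum.reindex_bij_witness[where i="\<lambda>(y,z,b). (b,(y,z))" and j="\<lambda>(b,(y,z)). (y,z,b)"])
    by (auto simp: mult_ac)
  also have "\<dots> = (\<Sum>y\<in>UNIV. \<Sum>z\<in>UNIV. q' y * q z * (\<Sum>a\<in>UNIV. \<Sum>c\<in>UNIV. R a z * R c y * hmul H a c i))"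
    by (simp only: qt2)
  also have "\<dots> = (\<Sum>x\<in>UNIV. \<Sum>y\<in>UNIV. lvec R q x * lvec R q' y * hmul H x y i)"
    unfolding lvec_eq
    apply (simp only: sum_distrib_left sum_distrib_right sum.cartesian_product UNIV_Times_UNIV)
    apply (rule sum.reindex_bij_witness[where i="\<lambda>(x,y2,(n,na)). (n,na,(x,y2))" and j="\<lambda>(y,z,(a,c)). (a,c,(y,z))"])
    by (auto simp: mult_ac)
  finally show ?thesis ..
qed

lemma Hax1: "(\<Sum>e\<in>UNIV. hmul H a b e * hmul H e c d) = (\<Sum>e\<in>UNIV. hmul H b c e * hmul H a e d)"
  using H unfolding hopf_alg_def by (elim conjE) blast
lemma Hax2: "(\<Sum>e\<in>UNIV. hone H e * hmul H e a c) = kd a c"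
  using H unfolding hopf_alg_def by (elim conjE) blast
lemma Hax3: "(\<Sum>e\<in>UNIV. hone H e * hmul H a e c) = kd a c"
  using H unfolding hopf_alg_def by (elim conjE) blast
lemma Hax4: "(\<Sum>e\<in>UNIV. hcom H a e b * hcou H e) = kd a b"
  using H unfolding hopf_alg_def by (elim conjE) blast
lemma Hax5: "(\<Sum>e\<in>UNIV. hcom H a b e * hcou H e) = kd a b"
  using H unfolding hopf_alg_def by (elim conjE) blast
lemma Hax6: "(\<Sum>c\<in>UNIV. hone H c * hcou H c) = 1"
  using H unfolding hopf_alg_def by (elim conjE) blast
lemmas Hax = Hax1 Hax2 Hax3 Hax4 Hax5 Hax6

lemma one_nz: "\<exists>x. hone H x \<noteq> 0"
proof (rule ccontr)
  assume "\<nexists>x. hone H x \<noteq> 0"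
  hence "(\<Sum>c\<in>UNIV. hone H c * hcou H c) = 0" by simp
  thus False using Hax(6) by simp
qed

lemma Rinv: "\<exists>R'. \<forall>x y.
       (\<Sum>a\<in>UNIV. \<Sum>b\<in>UNIV. \<Sum>a'\<in>UNIV. \<Sum>b'\<in>UNIV. R a b * R' a' b' * hmul H a a' x * hmul H b b' y)
          = hone H x * hone H y"
proof -
  from QT obtain R' where "\<forall>x y.
       (\<Sum>a\<in>UNIV. \<Sum>b\<in>UNIV. \<Sum>a'\<in>UNIV. \<Sum>b'\<in>UNIV. R a b * R' a' b' * hmul H a a' x * hmul H b b' y)
          = hone H x * hone H y \<and>
       (\<Sum>a\<in>UNIV. \<Sum>b\<in>UNIV. \<Sum>a'\<in>UNIV. \<Sum>b'\<in>UNIV. R' a b * R a' b' * hmul H a a' x * hmul H b b' y)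
          = hone H x * hone H y" unfolding quasitriangular_def by (elim conjE exE) 
  thus ?thesis by blast
qed

lemma R3A: "R y z = (\<Sum>b\<in>UNIV. \<Sum>d\<in>UNIV. rvec R (hcou H) b * R y d * hmul H b d z)"
proof -
  have "R y z = (\<Sum>x\<in>UNIV. hcou H x * (\<Sum>a\<in>UNIV. R a z * hcom H a x y))"
  proof -
    have "(\<Sum>x\<in>UNIV. hcou H x * (\<Sum>a\<in>UNIV. R a z * hcom H a x y)) = (\<Sum>a\<in>UNIV. R a z * (\<Sum>x\<in>UNIV. hcom H a x y * hcou H x))"
      by (simp only: sum_distrib_left mult_ac) (rule sum.swap)
    thus ?thesis by (simp add: Hax)
  qed
  also have "\<dots> = (\<Sum>x\<in>UNIV. hcou H x * (\<Sum>b\<in>UNIV. \<Sum>d\<in>UNIV. R x b * R y d * hmul H b d z))"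
    by (simp only: qt1)
  also have "\<dots> = (\<Sum>b\<in>UNIV. \<Sum>d\<in>UNIV. rvec R (hcou H) b * R y d * hmul H b d z)"
    unfolding rvec_eq
    apply (simp only: sum_distrib_left sum_distrib_right sum.cartesian_product UNIV_Times_UNIV)
    apply (rule sum.reindex_bij_witness[where i="\<lambda>(b,d,x). (x,(b,d))" and j="\<lambda>(x,(b,d)). (b,d,x)"])
    by (auto simp: mult_ac)
  finally show ?thesis .
qed

lemma R3: "rvec R (hcou H) = hone H"
proof -
  obtain R' where RR: "\<And>x y. (\<Sum>a\<in>UNIV. \<Sum>b\<in>UNIV. \<Sum>a'\<in>UNIV. \<Sum>b'\<in>UNIV. R a b * R' a' b' * hmul H a a' x * hmul H b b' y)
          = hone H x * hone H y" using Rinv by blast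
  define u where "u = rvec R (hcou H)"
  have A: "\<And>y z. (\<Sum>b\<in>UNIV. \<Sum>d\<in>UNIV. u b * R y d * hmul H b d z) = R y z" unfolding u_def by (rule R3A[symmetric])
  have key: "hone H x * hone H y = hone H x * u y" for x y
  proof -
    have "hone H x * hone H y = (\<Sum>a\<in>UNIV. \<Sum>b\<in>UNIV. \<Sum>a'\<in>UNIV. \<Sum>b'\<in>UNIV.
        (\<Sum>b0\<in>UNIV. \<Sum>d\<in>UNIV. u b0 * R a d * hmul H b0 d b) * R' a' b' * hmul H a a' x * hmul H b b' y)"
      by (simp only: A RR)
    also have "\<dots> = (\<Sum>a\<in>UNIV. \<Sum>a'\<in>UNIV. \<Sum>b'\<in>UNIV. \<Sum>b0\<in>UNIV. \<Sum>d\<in>UNIV.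
        u b0 * R a d * R' a' b' * hmul H a a' x * (\<Sum>b\<in>UNIV. hmul H b0 d b * hmul H b b' y))"
      apply (simp only: sum_distrib_left sum_distrib_right sum.cartesian_product UNIV_Times_UNIV)
      apply (rule sum.reindex_bij_witness[where i="\<lambda>(a,a',b',b0,d,b). (a,b,a',b',(b0,d))" and j="\<lambda>(a,b,a',b',(b0,d)). (a,a',b',b0,d,b)"])
      by (auto simp: mult_ac)
    also have "\<dots> = (\<Sum>a\<in>UNIV. \<Sum>a'\<in>UNIV. \<Sum>b'\<in>UNIV. \<Sum>b0\<in>UNIV. \<Sum>d\<in>UNIV.
        u b0 * R a d * R' a' b' * hmul H a a' x * (\<Sum>e\<in>UNIV. hmul H d b' e * hmul H b0 e y))"
      by (simp only: Hax(1))
    also have "\<dots> = (\<Sum>b0\<in>UNIV. \<Sum>e\<in>UNIV. u b0 * hmul H b0 e y *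
        (\<Sum>a\<in>UNIV. \<Sum>d\<in>UNIV. \<Sum>a'\<in>UNIV. \<Sum>b'\<in>UNIV. R a d * R' a' b' * hmul H a a' x * hmul H d b' e))"
      apply (simp only: sum_distrib_left sum_distrib_right sum.cartesian_product UNIV_Times_UNIV)
      apply (rule sum.reindex_bij_witness[where i="\<lambda>(b0,e,a,d,a',b'). (a,a',b',b0,d,e)" and j="\<lambda>(a,a',b',b0,d,e). (b0,e,a,d,a',b')"])
      by (auto simp: mult_ac)
    also have "\<dots> = (\<Sum>b0\<in>UNIV. \<Sum>e\<in>UNIV. u b0 * hmul H b0 e y * (hone H x * hone H e))"
      by (simp only: RR)
    also have "\<dots> = hone H x * (\<Sum>b0\<in>UNIV. u b0 * (\<Sum>e\<in>UNIV. hone H e * hmul H b0 e y))"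
      by (simp add: sum_distrib_left mult_ac)
    also have "\<dots> = hone H x * u y" by (simp add: Hax)
    finally show ?thesis .
  qed
  obtain x where "hone H x \<noteq> 0" using one_nz by blast
  with key have "hone H y = u y" for y by (metis mult_left_cancel)
  thus ?thesis unfolding u_def by auto
qed

lemma R4A: "R x y = (\<Sum>a\<in>UNIV. \<Sum>c\<in>UNIV. lvec R (hcou H) a * R c y * hmul H a c x)"
proof -
  have "R x y = (\<Sum>z\<in>UNIV. hcou H z * (\<Sum>a\<in>UNIV. R x a * hcom H a y z))"
  proof -
    have "(\<Sum>z\<in>UNIV. hcou H z * (\<Sum>a\<in>UNIV. R x a * hcom H a y z)) = (\<Sum>a\<in>UNIV. R x a * (\<Sum>z\<in>UNIV. hcom H a y z * hcou H z))"
      by (simp only: sum_distrib_left mult_ac) (rule sum.swap)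
    thus ?thesis by (simp add: Hax)
  qed
  also have "\<dots> = (\<Sum>z\<in>UNIV. hcou H z * (\<Sum>a\<in>UNIV. \<Sum>c\<in>UNIV. R a z * R c y * hmul H a c x))"
    by (simp only: qt2)
  also have "\<dots> = (\<Sum>a\<in>UNIV. \<Sum>c\<in>UNIV. lvec R (hcou H) a * R c y * hmul H a c x)"
    unfolding lvec_eq
    apply (simp only: sum_distrib_left sum_distrib_right sum.cartesian_product UNIV_Times_UNIV)
    apply (rule sum.reindex_bij_witness[where i="\<lambda>(b,d,x). (x,(b,d))" and j="\<lambda>(x,(b,d)). (b,d,x)"])
    by (auto simp: mult_ac)
  finally show ?thesis .
qed

lemma R4: "lvec R (hcou H) = hone H"
proof -
  obtain R' where RR: "\<And>x y. (\<Sum>a\<in>UNIV. \<Sum>b\<in>UNIV. \<Sum>a'\<in>UNIV. \<Sum>b'\<in>UNIV. R a b * R' a' b' * hmul H a a' x * hmul H b b' y)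
          = hone H x * hone H y" using Rinv by blast
  define w where "w = lvec R (hcou H)"
  have A: "\<And>x y. (\<Sum>a\<in>UNIV. \<Sum>c\<in>UNIV. w a * R c y * hmul H a c x) = R x y" unfolding w_def by (rule R4A[symmetric])
  have key: "hone H x * hone H y = w x * hone H y" for x y
  proof -
    have "hone H x * hone H y = (\<Sum>a\<in>UNIV. \<Sum>b\<in>UNIV. \<Sum>a'\<in>UNIV. \<Sum>b'\<in>UNIV.
        (\<Sum>a0\<in>UNIV. \<Sum>c\<in>UNIV. w a0 * R c b * hmul H a0 c a) * R' a' b' * hmul H a a' x * hmul H b b' y)"
      by (simp only: A RR)
    also have "\<dots> = (\<Sum>b\<in>UNIV. \<Sum>a'\<in>UNIV. \<Sum>b'\<in>UNIV. \<Sum>a0\<in>UNIV. \<Sum>c\<in>UNIV.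
        w a0 * R c b * R' a' b' * hmul H b b' y * (\<Sum>a\<in>UNIV. hmul H a0 c a * hmul H a a' x))"
      apply (simp only: sum_distrib_left sum_distrib_right sum.cartesian_product UNIV_Times_UNIV)
      apply (rule sum.reindex_bij_witness[where i="\<lambda>(b,a',b',a0,c,a). (a,b,a',b',(a0,c))" and j="\<lambda>(a,b,a',b',(a0,c)). (b,a',b',a0,c,a)"])
      by (auto simp: mult_ac)
    also have "\<dots> = (\<Sum>b\<in>UNIV. \<Sum>a'\<in>UNIV. \<Sum>b'\<in>UNIV. \<Sum>a0\<in>UNIV. \<Sum>c\<in>UNIV.
        w a0 * R c b * R' a' b' * hmul H b b' y * (\<Sum>e\<in>UNIV. hmul H c a' e * hmul H a0 e x))"
      by (simp only: Hax(1))
    also have "\<dots> = (\<Sum>a0\<in>UNIV. \<Sum>e\<in>UNIV. w a0 * hmul H a0 e x *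
        (\<Sum>c\<in>UNIV. \<Sum>b\<in>UNIV. \<Sum>a'\<in>UNIV. \<Sum>b'\<in>UNIV. R c b * R' a' b' * hmul H c a' e * hmul H b b' y))"
      apply (simp only: sum_distrib_left sum_distrib_right sum.cartesian_product UNIV_Times_UNIV)
      apply (rule sum.reindex_bij_witness[where i="\<lambda>(a0,e,c,b,a',b'). (b,a',b',a0,c,e)" and j="\<lambda>(b,a',b',a0,c,e). (a0,e,c,b,a',b')"])
      by (auto simp: mult_ac)
    also have "\<dots> = (\<Sum>a0\<in>UNIV. \<Sum>e\<in>UNIV. w a0 * hmul H a0 e x * (hone H e * hone H y))"
      by (simp only: RR)
    also have "\<dots> = hone H y * (\<Sum>a0\<in>UNIV. w a0 * (\<Sum>e\<in>UNIV. hone H e * hmul H a0 e x))"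
      by (simp add: sum_distrib_left mult_ac)
    also have "\<dots> = w x * hone H y" by (simp add: Hax)
    finally show ?thesis .
  qed
  obtain y where "hone H y \<noteq> 0" using one_nz by blast
  with key have "hone H x = w x" for x by (metis mult_right_cancel)
  thus ?thesis unfolding w_def by auto
qed

end

lemma hcd_fields:
  "hmul (hcop (hdual K)) = (\<lambda>x y a. hcom K a x y)" "hone (hcop (hdual K)) = hcou K"
  "hcom (hcop (hdual K)) = (\<lambda>a x y. hmul K y x a)" "hcou (hcop (hdual K)) = hone K"
  unfolding hcop_def hdual_def by simp_all

lemma ha_assoc: "hopf_alg K \<Longrightarrow> (\<Sum>e\<in>UNIV. hmul K a b e * hmul K e c d) = (\<Sum>e\<in>UNIV. hmul K b c e * hmul K a e d)"
  unfolding hopf_alg_def by (elim conjE) blast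
lemma ha_u1: "hopf_alg K \<Longrightarrow> (\<Sum>e\<in>UNIV. hone K e * hmul K e a c) = kd a c"
  unfolding hopf_alg_def by (elim conjE) blast
lemma ha_u2: "hopf_alg K \<Longrightarrow> (\<Sum>e\<in>UNIV. hone K e * hmul K a e c) = kd a c"
  unfolding hopf_alg_def by (elim conjE) blast

lemma coalg_hcd: assumes "hopf_alg K" shows "coalg (hcop (hdual K))"
proof -
  have a: "\<And>a b c d. (\<Sum>e\<in>UNIV. hmul K a b e * hmul K e c d) = (\<Sum>e\<in>UNIV. hmul K b c e * hmul K a e d)"
   and u1: "\<And>a c. (\<Sum>e\<in>UNIV. hone K e * hmul K e a c) = kd a c"
   and u2: "\<And>a c. (\<Sum>e\<in>UNIV. hone K e * hmul K a e c) = kd a c"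
    using ha_assoc[OF assms] ha_u1[OF assms] ha_u2[OF assms] by blast+
  show ?thesis unfolding coalg_def hcd_fields
  proof (intro conjI allI)
    fix a x y z
    show "(\<Sum>e\<in>UNIV. hmul K z e a * hmul K y x e) = (\<Sum>e\<in>UNIV. hmul K e x a * hmul K z y e)"
      using a[of z y x a] by (simp add: mult.commute)
  next
    fix a b
    show "(\<Sum>e\<in>UNIV. hmul K b e a * hone K e) = kd a b" using u2[of b a] by (simp add: mult.commute kd_sym)
    show "(\<Sum>e\<in>UNIV. hmul K e b a * hone K e) = kd a b" using u1[of b a] by (simp add: mult.commute kd_sym)
  qed
qed

lemma coalg_hcdh: assumes "hopf_alg K" shows "coalg (hcop (hdual (hop K)))"
proof -
  have a: "\<And>a b c d. (\<Sum>e\<in>UNIV. hmul K a b e * hmul K e c d) = (\<Sum>e\<in>UNIV. hmul K b c e * hmul K a e d)"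
   and u1: "\<And>a c. (\<Sum>e\<in>UNIV. hone K e * hmul K e a c) = kd a c"
   and u2: "\<And>a c. (\<Sum>e\<in>UNIV. hone K e * hmul K a e c) = kd a c"
    using ha_assoc[OF assms] ha_u1[OF assms] ha_u2[OF assms] by blast+
  show ?thesis unfolding coalg_def hcd_fields hop_fields
  proof (intro conjI allI)
    fix a x y z
    show "(\<Sum>e\<in>UNIV. hmul K e z a * hmul K x y e) = (\<Sum>e\<in>UNIV. hmul K x e a * hmul K y z e)"
      using a[of x y z a] by (simp add: mult.commute)
  next
    fix a b
    show "(\<Sum>e\<in>UNIV. hmul K e b a * hone K e) = kd a b" using u1[of b a] by (simp add: mult.commute kd_sym)
    show "(\<Sum>e\<in>UNIV. hmul K b e a * hone K e) = kd a b" using u2[of b a] by (simp add: mult.commute kd_sym)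
  qed
qed

lemma coalg_hop: "hopf_alg K \<Longrightarrow> coalg (hop K)"
  unfolding coalg_def hop_fields by (rule hopf_coalg[unfolded coalg_def])

lemma alghom_hophop: "alghom A (hop (hop K)) \<phi> = alghom A K \<phi>"
  unfolding alghom_def hop_fields ..
lemma cohom_hop2: "cohom A (hop K) \<phi> = cohom A K \<phi>"
  unfolding cohom_def hop_fields ..
lemma cohom_hop1: "cohom (hop K) A \<phi> = cohom K A \<phi>"
  unfolding cohom_def hop_fields ..

lemma id_alghom: "alghom K K kd"
  unfolding alghom_def by (simp add: kd_simps)
lemma id_cohom: "cohom K K kd"
  unfolding cohom_def by (simp add: kd_simps)

lemma kd_pair: "kd (a,b) (c,d) = kd a c * kd b d"
  by (simp add: kd_def)

lemma kd_kd: "(\<Sum>y\<in>UNIV. kd h y * kd y h') = (kd h (h'::'a::finite) :: 'k::field)"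
  by (simp add: kd_mult1)

lemma tr_tr: "tr (tr F) = F" by (simp add: tr_def)
lemma mm_kd: "mm kd kd = kd" by (simp add: mm_def fun_eq_iff kd_simps kd_def)
lemma mm_tr: "mm (tr f) (tr g) = tr (mm g f)" by (simp add: mm_def tr_def fun_eq_iff mult.commute)
lemma tr_kd: "tr kd = kd" by (simp add: tr_def fun_eq_iff kd_sym)
lemma tr_pb_tr: "tr (pb a b (tr F)) = pb b a F"
  unfolding tr_def pb_def by (intro ext) (subst sum.swap, simp add: mult_ac)
lemma pb_kd_right: "pb \<theta> kd kd = \<theta>"
  by (simp add: pb_def fun_eq_iff kd_simps)

lemma hdd: "hdual (hdual H) = H"
  by (cases H) (simp add: hdual_def)

lemma linext_kd: "linext \<iota> (\<lambda>a. kd b a) = \<iota> b"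
  unfolding linext_def by (simp add: fun_eq_iff)

context
  fixes H :: "('i::finite, 'k::field) hopf" and R :: "'i \<Rightarrow> 'i \<Rightarrow> 'k"
    and Hr :: "('b::finite, 'k) hopf" and \<iota>r :: "'b \<Rightarrow> 'i \<Rightarrow> 'k"
    and Hl :: "('l::finite, 'k) hopf" and \<iota>l :: "'l \<Rightarrow> 'i \<Rightarrow> 'k"
    and P :: "'b \<Rightarrow> 'l \<Rightarrow> 'k"
  assumes H: "hopf_alg H" and QT: "quasitriangular H R"
    and Hr: "hopf_alg Hr" and hr: "hopf_hom Hr (hdual (hdual H)) \<iota>r" and ir: "lin_inj \<iota>r"
    and rr: "range (linext \<iota>r) = range (rvec R)"
    and Hl: "hopf_alg Hl" and hl: "hopf_hom Hl (hdual (hdual H)) \<iota>l" and il: "lin_inj \<iota>l"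
    and rl: "range (linext \<iota>l) = range (lvec R)"
    and hyp: "\<forall>c d p q. linext \<iota>r c = rvec R p \<longrightarrow> linext \<iota>l d = lvec R q \<longrightarrow>
           (\<Sum>b\<in>UNIV. \<Sum>h\<in>UNIV. c b * d h * P b h) = sigma R p q"
begin

lemma hr': "hopf_hom Hr H \<iota>r" using hr by (simp add: hdd)
lemma hl': "hopf_hom Hl H \<iota>l" using hl by (simp add: hdd)

lemma rm: "(\<Sum>c\<in>UNIV. hmul Hr a b c * \<iota>r c z) = (\<Sum>x\<in>UNIV. \<Sum>y\<in>UNIV. \<iota>r a x * \<iota>r b y * hmul H x y z)"
  using hr' unfolding hopf_hom_def by blast
lemma ru: "(\<Sum>a\<in>UNIV. hone Hr a * \<iota>r a z) = hone H z"
  using hr' unfolding hopf_hom_def by blast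
lemma rc: "(\<Sum>z\<in>UNIV. \<iota>r a z * hcom H z x y) = (\<Sum>c\<in>UNIV. \<Sum>d\<in>UNIV. hcom Hr a c d * \<iota>r c x * \<iota>r d y)"
  using hr' unfolding hopf_hom_def by blast
lemma re: "(\<Sum>z\<in>UNIV. \<iota>r a z * hcou H z) = hcou Hr a"
  using hr' unfolding hopf_hom_def by blast
lemma lm: "(\<Sum>c\<in>UNIV. hmul Hl a b c * \<iota>l c z) = (\<Sum>x\<in>UNIV. \<Sum>y\<in>UNIV. \<iota>l a x * \<iota>l b y * hmul H x y z)"
  using hl' unfolding hopf_hom_def by blast
lemma lu: "(\<Sum>a\<in>UNIV. hone Hl a * \<iota>l a z) = hone H z"
  using hl' unfolding hopf_hom_def by blast
lemma lc: "(\<Sum>z\<in>UNIV. \<iota>l a z * hcom H z x y) = (\<Sum>c\<in>UNIV. \<Sum>d\<in>UNIV. hcom Hl a c d * \<iota>l c x * \<iota>l d y)"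
  using hl' unfolding hopf_hom_def by blast
lemma le: "(\<Sum>z\<in>UNIV. \<iota>l a z * hcou H z) = hcou Hl a"
  using hl' unfolding hopf_hom_def by blast

lemma ex_pr: "\<exists>p. \<iota>r b = rvec R p"
proof -
  have "linext \<iota>r (\<lambda>a. kd b a) \<in> range (rvec R)" using rr by blast
  thus ?thesis by (auto simp: linext_kd)
qed
lemma ex_ql: "\<exists>q. \<iota>l h = lvec R q"
proof -
  have "linext \<iota>l (\<lambda>a. kd h a) \<in> range (lvec R)" using rl by blast
  thus ?thesis by (auto simp: linext_kd)
qed

definition pr :: "'b \<Rightarrow> 'i \<Rightarrow> 'k" where "pr b = (SOME p. \<iota>r b = rvec R p)"
definition ql :: "'l \<Rightarrow> 'i \<Rightarrow> 'k" where "ql h = (SOME q. \<iota>l h = lvec R q)"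

lemma pr: "\<iota>r b = rvec R (pr b)" unfolding pr_def using ex_pr by (rule someI_ex)
lemma ql: "\<iota>l h = lvec R (ql h)" unfolding ql_def using ex_ql by (rule someI_ex)

lemma hyp': "linext \<iota>r c = rvec R p \<Longrightarrow> linext \<iota>l d = lvec R q \<Longrightarrow>
           (\<Sum>b\<in>UNIV. \<Sum>h\<in>UNIV. c b * d h * P b h) = sigma R p q"
  using hyp by blast

lemma P_sig: "P b h = sigma R (pr b) (ql h)"
proof -
  have "(\<Sum>b'\<in>UNIV. \<Sum>h'\<in>UNIV. kd b b' * kd h h' * P b' h') = sigma R (pr b) (ql h)"
    by (rule hyp') (simp_all add: linext_kd pr[symmetric] ql[symmetric])
  thus ?thesis by (simp add: kd_simps)
qed

lemma P_pr: "P b h = (\<Sum>i\<in>UNIV. pr b i * \<iota>l h i)"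
  unfolding P_sig sigma_l ql[symmetric] ..
lemma P_ql: "P b h = (\<Sum>j\<in>UNIV. \<iota>r b j * ql h j)"
  unfolding P_sig sigma_r pr[symmetric] ..

lemma SK1: "(\<Sum>c\<in>UNIV. hmul Hr b b' c * P c h) = (\<Sum>h1\<in>UNIV. \<Sum>h2\<in>UNIV. hcom Hl h h1 h2 * P b h1 * P b' h2)"
proof -
  have lin: "linext \<iota>r (\<lambda>c. hmul Hr b b' c) = rvec R (dmul H (pr b) (pr b'))"
    unfolding linext_def by (simp add: fun_eq_iff rm R1[OF H QT] flip: pr)
  have "(\<Sum>c\<in>UNIV. hmul Hr b b' c * P c h) = (\<Sum>c\<in>UNIV. \<Sum>h'\<in>UNIV. hmul Hr b b' c * kd h h' * P c h')"
    by (simp add: kd_simps)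
  also have "\<dots> = sigma R (dmul H (pr b) (pr b')) (ql h)"
    by (rule hyp'[OF lin]) (simp add: linext_kd ql[symmetric])
  also have "\<dots> = (\<Sum>i\<in>UNIV. dmul H (pr b) (pr b') i * \<iota>l h i)"
    unfolding sigma_l ql[symmetric] ..
  also have "\<dots> = (\<Sum>x\<in>UNIV. \<Sum>y\<in>UNIV. pr b x * pr b' y * (\<Sum>i\<in>UNIV. \<iota>l h i * hcom H i x y))"
    unfolding dmul_def
    apply (simp only: sum_distrib_left sum_distrib_right sum.cartesian_product UNIV_Times_UNIV)
    apply (rule sum.reindex_bij_witness[where i="\<lambda>(x,y,i). (i,(x,y))" and j="\<lambda>(i,(x,y)). (x,y,i)"])
    by (auto simp: mult_ac)
  also have "\<dots> = (\<Sum>x\<in>UNIV. \<Sum>y\<in>UNIV. pr b x * pr b' y * (\<Sum>h1\<in>UNIV. \<Sum>h2\<in>UNIV. hcom Hl h h1 h2 * \<iota>l h1 x * \<iota>l h2 y))"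
    by (simp only: lc)
  also have "\<dots> = (\<Sum>h1\<in>UNIV. \<Sum>h2\<in>UNIV. hcom Hl h h1 h2 * (\<Sum>i\<in>UNIV. pr b i * \<iota>l h1 i) * (\<Sum>i\<in>UNIV. pr b' i * \<iota>l h2 i))"
    apply (simp only: sum_distrib_left sum_distrib_right sum.cartesian_product UNIV_Times_UNIV)
    apply (rule sum.reindex_bij_witness[where i="\<lambda>(h1,h2,y,x). (x,y,(h1,h2))" and j="\<lambda>(x,y,(h1,h2)). (h1,h2,y,x)"])
    by (auto simp: mult_ac)
  finally show ?thesis by (simp only: P_pr[symmetric])
qed

lemma SK2: "(\<Sum>c\<in>UNIV. hmul Hl h h' c * P b c) = (\<Sum>b1\<in>UNIV. \<Sum>b2\<in>UNIV. hcom Hr b b1 b2 * P b2 h * P b1 h')"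
proof -
  have lin: "linext \<iota>l (\<lambda>c. hmul Hl h h' c) = lvec R (dmul H (ql h') (ql h))"
    unfolding linext_def by (simp add: fun_eq_iff lm R2[OF H QT, symmetric] flip: ql)
  have "(\<Sum>c\<in>UNIV. hmul Hl h h' c * P b c) = (\<Sum>b''\<in>UNIV. kd b b'' * (\<Sum>c\<in>UNIV. hmul Hl h h' c * P b'' c))"
    by (simp add: kd_simps)
  also have "\<dots> = (\<Sum>b''\<in>UNIV. \<Sum>c\<in>UNIV. kd b b'' * hmul Hl h h' c * P b'' c)"
    by (simp add: sum_distrib_left mult.assoc)
  also have "\<dots> = sigma R (pr b) (dmul H (ql h') (ql h))"
    by (rule hyp'[OF _ lin]) (simp add: linext_kd pr[symmetric])
  also have "\<dots> = (\<Sum>j\<in>UNIV. \<iota>r b j * dmul H (ql h') (ql h) j)"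
    unfolding sigma_r pr[symmetric] ..
  also have "\<dots> = (\<Sum>x\<in>UNIV. \<Sum>y\<in>UNIV. ql h' x * ql h y * (\<Sum>j\<in>UNIV. \<iota>r b j * hcom H j x y))"
    unfolding dmul_def
    apply (simp only: sum_distrib_left sum_distrib_right sum.cartesian_product UNIV_Times_UNIV)
    apply (rule sum.reindex_bij_witness[where i="\<lambda>(x,y,i). (i,(x,y))" and j="\<lambda>(i,(x,y)). (x,y,i)"])
    by (auto simp: mult_ac)
  also have "\<dots> = (\<Sum>x\<in>UNIV. \<Sum>y\<in>UNIV. ql h' x * ql h y * (\<Sum>b1\<in>UNIV. \<Sum>b2\<in>UNIV. hcom Hr b b1 b2 * \<iota>r b1 x * \<iota>r b2 y))"
    by (simp only: rc)
  also have "\<dots> = (\<Sum>b1\<in>UNIV. \<Sum>b2\<in>UNIV. hcom Hr b b1 b2 * (\<Sum>j\<in>UNIV. \<iota>r b2 j * ql h j) * (\<Sum>j\<in>UNIV. \<iota>r b1 j * ql h' j))"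
    apply (simp only: sum_distrib_left sum_distrib_right sum.cartesian_product UNIV_Times_UNIV)
    apply (rule sum.reindex_bij_witness[where i="\<lambda>(b1,b2,x,y). (x,y,(b1,b2))" and j="\<lambda>(x,y,(b1,b2)). (b1,b2,x,y)"])
    by (auto simp: mult_ac)
  finally show ?thesis by (simp only: P_ql[symmetric])
qed

lemma SKu: "(\<Sum>c\<in>UNIV. hone Hr c * P c h) = hcou Hl h"
proof -
  have lin: "linext \<iota>r (hone Hr) = rvec R (hcou H)"
    unfolding linext_def by (simp add: fun_eq_iff ru R3[OF H QT])
  have "(\<Sum>c\<in>UNIV. hone Hr c * P c h) = (\<Sum>c\<in>UNIV. \<Sum>h'\<in>UNIV. hone Hr c * kd h h' * P c h')"
    by (simp add: kd_simps)
  also have "\<dots> = sigma R (hcou H) (ql h)"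
    by (rule hyp'[OF lin]) (simp add: linext_kd ql[symmetric])
  also have "\<dots> = (\<Sum>i\<in>UNIV. \<iota>l h i * hcou H i)"
    unfolding sigma_l ql[symmetric] by (simp add: mult.commute)
  finally show ?thesis by (simp add: le)
qed

lemma SKc: "(\<Sum>h\<in>UNIV. hone Hl h * P b h) = hcou Hr b"
proof -
  have lin: "linext \<iota>l (hone Hl) = lvec R (hcou H)"
    unfolding linext_def by (simp add: fun_eq_iff lu R4[OF H QT])
  have "(\<Sum>h\<in>UNIV. hone Hl h * P b h) = (\<Sum>b'\<in>UNIV. kd b b' * (\<Sum>h\<in>UNIV. hone Hl h * P b' h))"
    by (simp add: kd_simps)
  also have "\<dots> = (\<Sum>b'\<in>UNIV. \<Sum>h\<in>UNIV. kd b b' * hone Hl h * P b' h)"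
    by (simp add: sum_distrib_left mult.assoc)
  also have "\<dots> = sigma R (pr b) (hcou H)"
    by (rule hyp'[OF _ lin]) (simp add: linext_kd pr[symmetric])
  also have "\<dots> = (\<Sum>j\<in>UNIV. \<iota>r b j * hcou H j)"
    unfolding sigma_r pr[symmetric] ..
  finally show ?thesis by (simp add: re)
qed

lemma nd1: "\<forall>c. lmap P c = (\<lambda>_. 0) \<longrightarrow> c = (\<lambda>_. 0)"
proof (intro allI impI)
  fix c assume c0: "lmap P c = (\<lambda>_. 0)"
  hence c0': "\<And>h. (\<Sum>b\<in>UNIV. c b * P b h) = 0" unfolding lmap_def by metis
  obtain p where p: "linext \<iota>r c = rvec R p" using rr by blast
  have "rvec R p j = 0" for j
  proof -
    obtain d where d: "linext \<iota>l d = lvec R (\<lambda>b. kd j b)" using rl by (metis rangeE rangeI)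
    have "(\<Sum>b\<in>UNIV. \<Sum>h\<in>UNIV. c b * d h * P b h) = rvec R p j"
      unfolding rvec_def by (rule hyp'[OF p d])
    moreover have "(\<Sum>b\<in>UNIV. \<Sum>h\<in>UNIV. c b * d h * P b h) = (\<Sum>h\<in>UNIV. d h * (\<Sum>b\<in>UNIV. c b * P b h))"
      by (simp only: sum_distrib_left mult_ac) (rule sum.swap)
    ultimately show ?thesis by (simp add: c0')
  qed
  hence "linext \<iota>r c = (\<lambda>_. 0)" using p by auto
  thus "c = (\<lambda>_. 0)" using ir unfolding lin_inj_def by blast
qed

lemma nd2: "\<forall>d. lmap (\<lambda>h b. P b h) d = (\<lambda>_. 0) \<longrightarrow> d = (\<lambda>_. 0)"
proof (intro allI impI)
  fix d assume d0: "lmap (\<lambda>h b. P b h) d = (\<lambda>_. 0)"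
  hence d0': "\<And>b. (\<Sum>h\<in>UNIV. d h * P b h) = 0" unfolding lmap_def by metis
  obtain q where q: "linext \<iota>l d = lvec R q" using rl by blast
  have "lvec R q i = 0" for i
  proof -
    obtain c where c: "linext \<iota>r c = rvec R (\<lambda>a. kd i a)" using rr by (metis rangeE rangeI)
    have "(\<Sum>b\<in>UNIV. \<Sum>h\<in>UNIV. c b * d h * P b h) = lvec R q i"
      unfolding lvec_def by (rule hyp'[OF c q])
    moreover have "(\<Sum>b\<in>UNIV. \<Sum>h\<in>UNIV. c b * d h * P b h) = (\<Sum>b\<in>UNIV. c b * (\<Sum>h\<in>UNIV. d h * P b h))"
      by (simp only: sum_distrib_left mult_ac)
    ultimately show ?thesis by (simp add: d0')
  qed
  hence "linext \<iota>l d = (\<lambda>_. 0)" using q by auto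
  thus "d = (\<lambda>_. 0)" using il unfolding lin_inj_def by blast
qed

lemma exN: "\<exists>N. mm P N = kd \<and> mm N P = kd"
proof -
  obtain N where "(\<forall>a a'. (\<Sum>h\<in>UNIV. P a h * N h a') = kd a a') \<and> (\<forall>h h'. (\<Sum>a\<in>UNIV. N h a * P a h') = kd h h')"
    using mat_inverse[OF nd1 nd2] by blast
  thus ?thesis unfolding mm_def by (intro exI[of _ N]) (auto simp: fun_eq_iff)
qed

lemma thP_alg: "alghom Hr (hcop (hdual Hl)) P"
  unfolding alghom_def hcd_fields using SK1 SKu by (simp add: mult_ac)

lemma thP_co: "cohom Hr (hcop (hdual Hl)) P"
  unfolding cohom_def hcd_fields
proof (intro conjI allI)
  fix a x y
  show "(\<Sum>z\<in>UNIV. P a z * hmul Hl y x z) = (\<Sum>c\<in>UNIV. \<Sum>d\<in>UNIV. hcom Hr a c d * P c x * P d y)"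
    using SK2[of y x a] by (simp add: mult_ac)
  show "(\<Sum>z\<in>UNIV. P a z * hone Hl z) = hcou Hr a" using SKc[of a] by (simp add: mult_ac)
qed

lemma psi_alg: "alghom Hl (hop (hcop (hdual (hop Hr)))) (tr P)"
  unfolding alghom_def hcd_fields hop_fields tr_def
proof (intro conjI allI)
  fix a b z
  have "(\<Sum>c\<in>UNIV. hmul Hl a b c * P z c) = (\<Sum>b1\<in>UNIV. \<Sum>b2\<in>UNIV. hcom Hr z b1 b2 * P b2 a * P b1 b)"
    by (rule SK2)
  also have "\<dots> = (\<Sum>x\<in>UNIV. \<Sum>y\<in>UNIV. P x a * P y b * hcom Hr z y x)"
    by (subst sum.swap) (simp add: mult_ac)
  finally show "(\<Sum>c\<in>UNIV. hmul Hl a b c * P z c) = (\<Sum>x\<in>UNIV. \<Sum>y\<in>UNIV. P x a * P y b * hcom Hr z y x)" .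
  show "(\<Sum>a\<in>UNIV. hone Hl a * P z a) = hcou Hr z" by (rule SKc)
qed

lemma psi_co: "cohom Hl (hcop (hdual (hop Hr))) (tr P)"
  unfolding cohom_def hcd_fields hop_fields tr_def
proof (intro conjI allI)
  fix a x y
  show "(\<Sum>z\<in>UNIV. P z a * hmul Hr x y z) = (\<Sum>c\<in>UNIV. \<Sum>d\<in>UNIV. hcom Hl a c d * P x c * P y d)"
    using SK1[of x y a] by (simp add: mult_ac)
  show "(\<Sum>z\<in>UNIV. P z a * hone Hr z) = hcou Hl a" using SKu[of a] by (simp add: mult_ac)
qed

lemma main_iso:
  shows "hopf_iso (gen_double Hr Hl P) (drinfeld Hl) \<and>
         hopf_iso (drinfeld Hl) (hop (drinfeld (hop Hr)))"
proof -
  obtain N where N1: "mm P N = kd" and N2: "mm N P = kd" using exN by blast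
  define Bd where "Bd = hcop (hdual Hl)"
  define B2 where "B2 = hcop (hdual (hop Hr))"
  define L2 where "L2 = hop Hr"
  define Q0 where "Q0 = (\<lambda>b h. \<Sum>b'\<in>UNIV. hant Hr b b' * P b' h)"
  have cHr: "coalg Hr" and cHl: "coalg Hl" using Hr Hl by (simp_all add: hopf_coalg)
  have cBd: "coalg Bd" unfolding Bd_def using Hl by (rule coalg_hcd)
  have cB2: "coalg B2" unfolding B2_def using Hr by (rule coalg_hcdh)
  have cL2: "coalg L2" unfolding L2_def using Hr by (rule coalg_hop)
  have Q0: "isinv Hr Hl P Q0" unfolding Q0_def by (rule skew_isinv[OF Hr SK1 SKu])
  have thA: "alghom Hr Bd P" and thC: "cohom Hr Bd P" unfolding Bd_def by (rule thP_alg, rule thP_co)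
  have NA: "alghom Bd Hr N" by (rule inv_alghom[OF thA N1 N2])
  have NC: "cohom Bd Hr N" by (rule inv_cohom[OF thC N1 N2])
  have psA: "alghom Hl (hop B2) (tr P)" and psC: "cohom Hl B2 (tr P)" unfolding B2_def by (rule psi_alg, rule psi_co)
  have trN1: "mm (tr P) (tr N) = kd" by (simp add: mm_tr N2 tr_kd)
  have trN2: "mm (tr N) (tr P) = kd" by (simp add: mm_tr N1 tr_kd)
  have trNC: "cohom B2 Hl (tr N)" by (rule inv_cohom[OF psC trN1 trN2])
  
  have T1: "isinv Bd Hl kd (pb N kd Q0)" "pinv Bd Hl kd = pb N kd Q0"
    by (rule transport[OF cHr cHl Q0 thC id_cohom NC id_cohom N1 N2 mm_kd mm_kd], simp add: pb_kd_right)+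
  have hQ1: "pinv Hr Hl P = pb P kd (pinv Bd Hl kd)"
    unfolding T1(2) pb_pb N1 mm_kd pb_kd using pinv_eq[OF cHr cHl Q0] by simp
  
  have PkdN: "kd = pb N (tr P) (tr kd)"
  proof (intro ext)
    fix f h
    have "pb N (tr P) (tr kd) f h = mm N P f h" by (simp add: pb_def tr_def mm_def kd_simps)
    thus "kd f h = pb N (tr P) (tr kd) f h" by (simp add: N2)
  qed
  have T2: "isinv L2 B2 (tr kd) (pb P (tr N) (pb N kd Q0))" "pinv L2 B2 (tr kd) = pb P (tr N) (pb N kd Q0)"
  proof -
    have NC2: "cohom Bd L2 N" unfolding L2_def cohom_hop2 by (rule NC)
    have thC2: "cohom L2 Bd P" unfolding L2_def cohom_hop1 by (rule thC)
    show "isinv L2 B2 (tr kd) (pb P (tr N) (pb N kd Q0))" "pinv L2 B2 (tr kd) = pb P (tr N) (pb N kd Q0)"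
      using transport[OF cBd cHl T1(1) NC2 psC thC2 trNC N2 N1 trN1 trN2 PkdN] by blast+
  qed
  have pB2: "pinv B2 L2 kd = tr (pb P (tr N) (pb N kd Q0))"
    using pinv_tr[OF cL2 cB2 T2(1)] by (simp add: tr_tr)
  have hQ2: "pinv Bd Hl kd = tr (pb (tr P) N (pinv B2 L2 kd))"
  proof -
    have "tr (pb (tr P) N (pinv B2 L2 kd)) = pb N (tr P) (pb P (tr N) (pb N kd Q0))"
      by (simp only: pB2 tr_pb_tr)
    also have "\<dots> = pb (mm N P) (mm (tr P) (tr N)) (pb N kd Q0)" by (rule pb_pb)
    also have "\<dots> = pinv Bd Hl kd" by (simp only: N2 trN1 pb_kd T1(2))
    finally show ?thesis ..
  qed
  have hP2: "kd = tr (pb (tr P) N kd)"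
    using PkdN by (simp add: tr_def pb_def fun_eq_iff mult_ac)
  
  have hom1: "hopf_hom (gen_double Hr Hl P) (gen_double Bd Hl kd) (\<lambda>(b,h) (x,y). P b x * kd h y)"
    by (rule F_hom[OF thA id_alghom thC id_cohom _ hQ1]) (simp add: pb_kd_right)
  have iso1: "hopf_iso (gen_double Hr Hl P) (drinfeld Hl)"
    unfolding hopf_iso_def drinfeld_def Bd_def[symmetric]
  proof (intro exI conjI)
    show "hopf_hom (gen_double Hr Hl P) (gen_double Bd Hl kd) (\<lambda>(b,h) (x,y). P b x * kd h y)" by (rule hom1)
    show "\<forall>a a'. (\<Sum>z\<in>UNIV. (case a of (b, h) \<Rightarrow> \<lambda>(x, y). P b x * kd h y) z * (\<lambda>(x::'l,y::'l) (b::'b,h::'l). N x b * kd y h) z a') = kd a a'"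
    proof (simp only: split_paired_All sum_pair prod.case; intro allI)
      fix b b' :: 'b and h h' :: 'l
      have "(\<Sum>x\<in>UNIV. \<Sum>y\<in>UNIV. P b x * kd h y * (N x b' * kd y h')) = (\<Sum>x\<in>UNIV. P b x * N x b' * (\<Sum>y\<in>UNIV. kd h y * kd y h'))"
        by (simp only: sum_distrib_left mult_ac)
      also have "\<dots> = (\<Sum>x\<in>UNIV. P b x * N x b') * kd h h'" by (simp add: kd_mult1 sum_distrib_right)
      finally have "(\<Sum>x\<in>UNIV. \<Sum>y\<in>UNIV. P b x * kd h y * (N x b' * kd y h')) = (\<Sum>x\<in>UNIV. P b x * N x b') * kd h h'" .
      thus "(\<Sum>x\<in>UNIV. \<Sum>y\<in>UNIV. P b x * kd h y * (N x b' * kd y h')) = kd (b, h) (b', h')"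
        by (simp add: mm_pt[OF N1] kd_pair)
    qed
    show "\<forall>z z'. (\<Sum>a\<in>UNIV. (\<lambda>(x::'l,y::'l) (b::'b,h::'l). N x b * kd y h) z a * (case a of (b, h) \<Rightarrow> \<lambda>(x, y). P b x * kd h y) z') = kd z z'"
    proof (simp only: split_paired_All sum_pair prod.case; intro allI)
      fix x y x' y' :: 'l
      have "(\<Sum>b\<in>UNIV. \<Sum>h\<in>UNIV. N x b * kd y h * (P b x' * kd h y')) = (\<Sum>b\<in>UNIV. N x b * P b x' * (\<Sum>h\<in>UNIV. kd y h * kd h y'))"
        by (simp only: sum_distrib_left mult_ac)
      also have "\<dots> = (\<Sum>b\<in>UNIV. N x b * P b x') * kd y y'" by (simp add: kd_mult1 sum_distrib_right)
      finally have "(\<Sum>b\<in>UNIV. \<Sum>h\<in>UNIV. N x b * kd y h * (P b x' * kd h y')) = (\<Sum>b\<in>UNIV. N x b * P b x') * kd y y'" .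
      thus "(\<Sum>b\<in>UNIV. \<Sum>h\<in>UNIV. N x b * kd y h * (P b x' * kd h y')) = kd (x, y) (x', y')"
        by (simp add: mm_pt[OF N2] kd_pair)
    qed
  qed
  
  have NA2: "alghom Bd (hop L2) N" unfolding L2_def alghom_hophop by (rule NA)
  have NC2: "cohom Bd L2 N" unfolding L2_def cohom_hop2 by (rule NC)
  have hom2: "hopf_hom (gen_double Bd Hl kd) (hop (gen_double B2 L2 kd)) (\<lambda>(b,h) (x,y). tr P h x * N b y)"
    by (rule F_swap_hom[OF NA2 psA NC2 psC hP2 hQ2])
  have iso2: "hopf_iso (drinfeld Hl) (hop (drinfeld (hop Hr)))"
    unfolding hopf_iso_def drinfeld_def Bd_def[symmetric]
  proof (intro exI conjI)
    show "hopf_hom (gen_double Bd Hl kd) (hop (gen_double (hcop (hdual (hop Hr))) (hop Hr) kd)) (\<lambda>(b,h) (x,y). tr P h x * N b y)"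
      by (rule hom2[unfolded B2_def L2_def])
    show "\<forall>a a'. (\<Sum>z\<in>UNIV. (case a of (b, h) \<Rightarrow> \<lambda>(x, y). tr P h x * N b y) z * (\<lambda>(x::'b,y::'b) (f::'l,h::'l). P y f * N h x) z a') = kd a a'"
    proof (simp only: split_paired_All sum_pair prod.case; intro allI)
      fix f h f' h' :: 'l
      have "(\<Sum>x\<in>UNIV. \<Sum>y\<in>UNIV. tr P h x * N f y * (P y f' * N h' x)) = (\<Sum>x\<in>UNIV. N h' x * P x h) * (\<Sum>y\<in>UNIV. N f y * P y f')"
        by (simp only: sum_product tr_def) (simp add: mult_ac)
      thus "(\<Sum>x\<in>UNIV. \<Sum>y\<in>UNIV. tr P h x * N f y * (P y f' * N h' x)) = kd (f, h) (f', h')"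
        by (simp add: mm_pt[OF N2] kd_pair kd_sym[of h'] mult.commute)
    qed
    show "\<forall>z z'. (\<Sum>a\<in>UNIV. (\<lambda>(x::'b,y::'b) (f::'l,h::'l). P y f * N h x) z a * (case a of (b, h) \<Rightarrow> \<lambda>(x, y). tr P h x * N b y) z') = kd z z'"
    proof (simp only: split_paired_All sum_pair prod.case; intro allI)
      fix x y x' y' :: 'b
      have "(\<Sum>f\<in>UNIV. \<Sum>h\<in>UNIV. P y f * N h x * (tr P h x' * N f y')) = (\<Sum>f\<in>UNIV. P y f * N f y') * (\<Sum>h\<in>UNIV. P x' h * N h x)"
        by (simp only: sum_product tr_def) (simp add: mult_ac)
      thus "(\<Sum>f\<in>UNIV. \<Sum>h\<in>UNIV. P y f * N h x * (tr P h x' * N f y')) = kd (x, y) (x', y')"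
        by (simp add: mm_pt[OF N1] kd_pair kd_sym[of x'])
    qed
  qed
  show ?thesis using iso1 iso2 by blast
qed

end

theorem proposition3p3:
  fixes H :: "('i::finite, 'k::field) hopf" and R :: "'i \<Rightarrow> 'i \<Rightarrow> 'k"
    and Hr :: "('b::finite, 'k) hopf" and \<iota>r :: "'b \<Rightarrow> 'i \<Rightarrow> 'k"
    and Hl :: "('l::finite, 'k) hopf" and \<iota>l :: "'l \<Rightarrow> 'i \<Rightarrow> 'k"
    and P :: "'b \<Rightarrow> 'l \<Rightarrow> 'k"
  assumes "hopf_alg H" and "quasitriangular H R"
    and "hopf_alg Hr" and "hopf_hom Hr (hdual (hdual H)) \<iota>r" and "lin_inj \<iota>r"
    and "range (linext \<iota>r) = range (rvec R)"
    and "hopf_alg Hl" and "hopf_hom Hl (hdual (hdual H)) \<iota>l" and "lin_inj \<iota>l"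
    and "range (linext \<iota>l) = range (lvec R)"
    and "\<forall>c d p q. linext \<iota>r c = rvec R p \<longrightarrow> linext \<iota>l d = lvec R q \<longrightarrow>
           (\<Sum>b\<in>UNIV. \<Sum>h\<in>UNIV. c b * d h * P b h) = sigma R p q"
  shows "hopf_iso (gen_double Hr Hl P) (drinfeld Hl) \<and>
         hopf_iso (drinfeld Hl) (hop (drinfeld (hop Hr)))"
  by (rule main_iso[OF assms])

end
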